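(* Let $h\ge 2$ and $m\ge h+1$. Over the bidirected $(m,h)$-CCN, the secrecy rate $h-1$ is achievable against a $1$-node passive adversary (by a single-round protocol).
   Context: Network model: a graph with unit-capacity edges; each use of an edge carries one symbol of a finite field $\mathbb{F}$ (taken sufficiently large), and entropies are measured in units of $\log|\mathbb{F}|$. A single source $S$ holds a message $\mathcal{W}$ to be multicast to a set of receivers. Each node (including receivers) may use its own private randomness; nodes share no prior common randomness and no side channel. An $N$-round protocol: in each round every (directed) edge is used at most once, and within a round transmissions may be scheduled in any causal order. Decodability: every receiver recovers $\mathcal{W}$ with zero error. Secrecy: $H(\mathcal{W}\mid \mathcal{V}_{\mathcal{A}})=H(\mathcal{W})$, where $\mathcal{V}_{\mathcal{A}}$ is the adversary's view. The secrecy rate is $H(\mathcal{W})/N$. A $1$-node passive adversary may choose any single node other than the source and the receivers and observes all values delivered to that node; secrecy must hold for every such choice. Directed $(m,h)$-CCN ($m\ge h$): nodes $S$, $S_1,\dots,S_h$, $A_1,\dots,A_m$, $B_1,\dots,B_m$, and $\binom{m}{h}$ receivers, one per $h$-subset of $\{B_1,\dots,B_m\}$; directed edges $S\to S_i$ ($1\le i\le h$), $S_i\to A_i$ ($1\le i\le h$), $S_i\to A_j$ for all $1\le i\le h$, $h<j\le m$, $A_j\to B_j$, and $B_j\to R$ whenever $B_j$ is in the $h$-subset of receiver $R$. The bidirected $(m,h)$-CCN is obtained by adding, for every directed edge $u\to v$ of the directed $(m,h)$-CCN, an additional edge $v\to u$. *)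

theory Defs
  imports "HOL-Algebra.Ring" "HOL-Library.FuncSet"
begin

datatype node = Src | SS nat | AA nat | BB nat | Rcv "nat set"

definition ccn_receivers :: "nat \<Rightarrow> nat \<Rightarrow> node set" where
  "ccn_receivers m h = Rcv ` {T. T \<subseteq> {1..m} \<and> card T = h}"

definition ccn_nodes :: "nat \<Rightarrow> nat \<Rightarrow> node set" where
  "ccn_nodes m h = {Src} \<union> SS ` {1..h} \<union> AA ` {1..m} \<union> BB ` {1..m} \<union> ccn_receivers m h"

definition dir_ccn_edges :: "nat \<Rightarrow> nat \<Rightarrow> (node \<times> node) set" where
  "dir_ccn_edges m h =
     {(Src, SS i) | i. 1 \<le> i \<and> i \<le> h}
   \<union> {(SS i, AA i) | i. 1 \<le> i \<and> i \<le> h}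
   \<union> {(SS i, AA j) | i j. 1 \<le> i \<and> i \<le> h \<and> h < j \<and> j \<le> m}
   \<union> {(AA j, BB j) | j. 1 \<le> j \<and> j \<le> m}
   \<union> {(BB j, Rcv T) | j T. T \<subseteq> {1..m} \<and> card T = h \<and> j \<in> T}"

definition bidir_ccn_edges :: "nat \<Rightarrow> nat \<Rightarrow> (node \<times> node) set" where
  "bidir_ccn_edges m h = dir_ccn_edges m h \<union> {(v, u). (u, v) \<in> dir_ccn_edges m h}"

text \<open>The local information of a node at some moment: the message (only at the source),
  its private random value, and the symbols delivered so far on its incoming edges.\<close>

type_synonym local_info = "nat list option \<times> nat \<times> (node \<times> node \<Rightarrow> nat option)"

definition local_view ::
  "node \<Rightarrow> node \<Rightarrow> nat list \<Rightarrow> (node \<Rightarrow> nat) \<Rightarrow> (node \<times> node \<Rightarrow> nat option) \<Rightarrow> local_info" where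
  "local_view s u w \<rho> vals =
     (if u = s then Some w else None, \<rho> u, \<lambda>e. if snd e = u then vals e else None)"

fun run_edges ::
  "node \<Rightarrow> (node \<times> node \<Rightarrow> local_info \<Rightarrow> nat) \<Rightarrow> (node \<times> node) list \<Rightarrow> nat list \<Rightarrow> (node \<Rightarrow> nat)
    \<Rightarrow> (node \<times> node \<Rightarrow> nat option) \<Rightarrow> (node \<times> node \<Rightarrow> nat option)" where
  "run_edges s enc [] w \<rho> vals = vals"
| "run_edges s enc (e # es) w \<rho> vals =
     run_edges s enc es w \<rho> (vals(e := Some (enc e (local_view s (fst e) w \<rho> vals))))"

definition exec_round ::
  "node \<Rightarrow> (node \<times> node \<Rightarrow> local_info \<Rightarrow> nat) \<Rightarrow> (node \<times> node) list \<Rightarrow> nat list \<Rightarrow> (node \<Rightarrow> nat)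
    \<Rightarrow> (node \<times> node \<Rightarrow> nat option)" where
  "exec_round s enc ord w \<rho> = run_edges s enc ord w \<rho> (\<lambda>_. None)"

definition adv_view ::
  "node \<Rightarrow> (node \<times> node \<Rightarrow> local_info \<Rightarrow> nat) \<Rightarrow> (node \<times> node) list \<Rightarrow> node \<Rightarrow> nat list \<Rightarrow> (node \<Rightarrow> nat)
    \<Rightarrow> (node \<times> node \<Rightarrow> nat option)" where
  "adv_view s enc ord v w \<rho> = (\<lambda>e. if snd e = v then exec_round s enc ord w \<rho> e else None)"

text \<open>A single-round (N = 1) protocol over the finite field F on network (V, E) with source s and
  receivers Rs, multicasting a message W uniform on F^r (so H(W) = r, rate r), with zero-error
  decoding and perfect secrecy against any single node of V - {s} - Rs.
  Private randomness of node u is uniform on {..<k u}, independent across nodes.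
  Since W is uniform (full support), H(W | view) = H(W) is equivalent to the distribution of the
  view being the same for every message value, expressed by counting randomness outcomes.\<close>

definition secure_single_round_scheme ::
  "node set \<Rightarrow> (node \<times> node) set \<Rightarrow> node \<Rightarrow> node set \<Rightarrow> nat ring \<Rightarrow> nat \<Rightarrow> bool" where
  "secure_single_round_scheme V E s Rs F r \<longleftrightarrow>
     (\<exists>(k :: node \<Rightarrow> nat) (ord :: (node \<times> node) list)
        (enc :: node \<times> node \<Rightarrow> local_info \<Rightarrow> nat) (dec :: node \<Rightarrow> local_info \<Rightarrow> nat list).
       let msgs = {w. length w = r \<and> set w \<subseteq> carrier F};
           rands = PiE V (\<lambda>u. {..<k u})
       in (\<forall>u\<in>V. 0 < k u)
        \<and> distinct ord \<and> set ord \<subseteq> E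
        \<and> (\<forall>e x. enc e x \<in> carrier F)
        \<and> (\<forall>w\<in>msgs. \<forall>\<rho>\<in>rands. \<forall>R\<in>Rs.
              dec R (local_view s R w \<rho> (exec_round s enc ord w \<rho>)) = w)
        \<and> (\<forall>v\<in>V - {s} - Rs. \<forall>w1\<in>msgs. \<forall>w2\<in>msgs. \<forall>x.
              card {\<rho>\<in>rands. adv_view s enc ord v w1 \<rho> = x}
            = card {\<rho>\<in>rands. adv_view s enc ord v w2 \<rho> = x}))"

end

theory Submission
  imports Defs "HOL-Number_Theory.Residues" "HOL-Algebra.Weak_Morphisms" "HOL-Computational_Algebra.Primes"
begin


lemma exists_nat_field:
  fixes m :: nat
  shows "\<exists>F :: nat ring. field F \<and> carrier F = {..<card (carrier F)} \<and> m < card (carrier F)"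
proof -
  obtain p :: nat where p: "prime p" "m < p" using bigger_prime by blast
  interpret R: residues_prime p "residue_ring (int p)" by unfold_locales (rule p(1), simp)
  have inj: "inj_on nat (carrier (residue_ring (int p)))"
    by (auto simp: R.res_carrier_eq inj_on_def)
  let ?F = "image_ring nat (residue_ring (int p))"
  have f: "field ?F" using R.inj_imp_image_ring_is_field[OF inj] .
  have c: "carrier ?F = {..<p}"
    unfolding image_ring_carrier R.res_carrier_eq
    apply (auto simp: image_iff)
    by (metis atLeastAtMost_iff int_ops(1) nat_int of_nat_0_le_iff of_nat_less_iff zle_diff1_eq)
  show ?thesis using f c p by (intro exI[of _ ?F]) auto
qed


context field begin

lemma minus_zero_iff:
  assumes "a \<in> carrier R" "b \<in> carrier R"
  shows "a \<ominus> b = \<zero> \<longleftrightarrow> a = b"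
  using assms by (metis a_minus_def add.inv_closed minus_equality r_neg)

inductive pdeg :: "nat \<Rightarrow> ('a \<Rightarrow> 'a) \<Rightarrow> bool" where
  pconst: "c \<in> carrier R \<Longrightarrow> pdeg n (\<lambda>X. c)"
| padd: "pdeg n f \<Longrightarrow> pdeg n g \<Longrightarrow> pdeg n (\<lambda>X. f X \<oplus> g X)"
| pscal: "pdeg n f \<Longrightarrow> c \<in> carrier R \<Longrightarrow> pdeg n (\<lambda>X. c \<otimes> f X)"
| plin: "pdeg n f \<Longrightarrow> a \<in> carrier R \<Longrightarrow> pdeg (Suc n) (\<lambda>X. (X \<ominus> a) \<otimes> f X)"
| pmono: "pdeg n f \<Longrightarrow> pdeg (Suc n) f"
| pcong: "pdeg n f \<Longrightarrow> (\<And>X. X \<in> carrier R \<Longrightarrow> g X = f X) \<Longrightarrow> pdeg n g"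

lemma pdeg_carrier: "pdeg n f \<Longrightarrow> X \<in> carrier R \<Longrightarrow> f X \<in> carrier R"
proof (induction arbitrary: X rule: pdeg.induct)
qed simp_all

lemma pdeg_mono_le: assumes "pdeg n f" "n \<le> n'" shows "pdeg n' f"
  using assms(2,1) by (induction rule: dec_induct) (auto intro: pmono)

lemma pdeg0_const_aux: "pdeg n f \<Longrightarrow> n = 0 \<Longrightarrow> \<exists>c. \<forall>X\<in>carrier R. f X = c"
proof (induction rule: pdeg.induct)
  case (padd n f g) then show ?case by force
next
  case (pscal n f c) then show ?case by force
qed auto

lemma pdeg0_const: "pdeg 0 f \<Longrightarrow> X \<in> carrier R \<Longrightarrow> Y \<in> carrier R \<Longrightarrow> f X = f Y"
  using pdeg0_const_aux[of 0 f] by auto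

lemma pdeg_factor:
  assumes "pdeg n f" "a \<in> carrier R"
  shows "\<exists>g. pdeg (n - 1) g \<and> (\<forall>X\<in>carrier R. f X = f a \<oplus> (X \<ominus> a) \<otimes> g X)"
  using assms(1)
proof (induction rule: pdeg.induct)
  case (pconst c n)
  show ?case
  proof (intro exI[of _ "\<lambda>X. \<zero>"] conjI ballI)
    show "pdeg (n - 1) (\<lambda>X. \<zero>)" by (rule pdeg.pconst) simp
    fix X assume "X \<in> carrier R"
    then show "c = c \<oplus> (X \<ominus> a) \<otimes> \<zero>" using pconst assms(2) by simp
  qed
next
  case (padd n f g)
  obtain g1 where g1: "pdeg (n - 1) g1" "\<forall>X\<in>carrier R. f X = f a \<oplus> (X \<ominus> a) \<otimes> g1 X"
    using padd.IH(1) by blast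
  obtain g2 where g2: "pdeg (n - 1) g2" "\<forall>X\<in>carrier R. g X = g a \<oplus> (X \<ominus> a) \<otimes> g2 X"
    using padd.IH(2) by blast
  show ?case
  proof (intro exI[of _ "\<lambda>X. g1 X \<oplus> g2 X"] conjI ballI)
    show "pdeg (n - 1) (\<lambda>X. g1 X \<oplus> g2 X)" using g1(1) g2(1) by (rule pdeg.padd)
    fix X assume X: "X \<in> carrier R"
    have c: "f a \<in> carrier R" "g a \<in> carrier R" "g1 X \<in> carrier R" "g2 X \<in> carrier R"
      using pdeg_carrier padd.hyps g1(1) g2(1) X assms(2) by auto
    have e1: "f X = f a \<oplus> (X \<ominus> a) \<otimes> g1 X" using g1(2) X by blast
    have e2: "g X = g a \<oplus> (X \<ominus> a) \<otimes> g2 X" using g2(2) X by blast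
    show "f X \<oplus> g X = f a \<oplus> g a \<oplus> (X \<ominus> a) \<otimes> (g1 X \<oplus> g2 X)"
      unfolding e1 e2 using X c assms(2) by algebra
  qed
next
  case (pscal n f c)
  obtain g1 where g1: "pdeg (n - 1) g1" "\<forall>X\<in>carrier R. f X = f a \<oplus> (X \<ominus> a) \<otimes> g1 X"
    using pscal.IH by blast
  show ?case
  proof (intro exI[of _ "\<lambda>X. c \<otimes> g1 X"] conjI ballI)
    show "pdeg (n - 1) (\<lambda>X. c \<otimes> g1 X)" using g1(1) pscal.hyps(2) by (rule pdeg.pscal)
    fix X assume X: "X \<in> carrier R"
    have cc: "f a \<in> carrier R" "g1 X \<in> carrier R"
      using pdeg_carrier pscal.hyps g1(1) X assms(2) by auto
    have e1: "f X = f a \<oplus> (X \<ominus> a) \<otimes> g1 X" using g1(2) X by blast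
    show "c \<otimes> f X = c \<otimes> f a \<oplus> (X \<ominus> a) \<otimes> (c \<otimes> g1 X)"
      unfolding e1 using X cc assms(2) pscal.hyps(2) by algebra
  qed
next
  case (plin n f b)
  obtain g1 where g1: "pdeg (n - 1) g1" "\<forall>X\<in>carrier R. f X = f a \<oplus> (X \<ominus> a) \<otimes> g1 X"
    using plin.IH by blast
  show ?case
  proof (intro exI[of _ "\<lambda>X. f X \<oplus> (a \<ominus> b) \<otimes> g1 X"] conjI ballI)
    have g1n: "pdeg n g1" using g1(1) by (rule pdeg_mono_le) simp
    have ab: "a \<ominus> b \<in> carrier R" using assms(2) plin.hyps(2) by simp
    have "pdeg n (\<lambda>X. f X \<oplus> (a \<ominus> b) \<otimes> g1 X)"
      by (rule pdeg.padd[OF plin.hyps(1) pdeg.pscal[OF g1n ab]])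
    then show "pdeg (Suc n - 1) (\<lambda>X. f X \<oplus> (a \<ominus> b) \<otimes> g1 X)" by simp
    fix X assume X: "X \<in> carrier R"
    have cc: "f a \<in> carrier R" "g1 X \<in> carrier R"
      using pdeg_carrier plin.hyps g1(1) X assms(2) by auto
    have e1: "f X = f a \<oplus> (X \<ominus> a) \<otimes> g1 X" using g1(2) X by blast
    show "(X \<ominus> b) \<otimes> f X = (a \<ominus> b) \<otimes> f a \<oplus> (X \<ominus> a) \<otimes> (f X \<oplus> (a \<ominus> b) \<otimes> g1 X)"
      unfolding e1 using X cc assms(2) plin.hyps(2) by algebra
  qed
next
  case (pmono n f)
  obtain g1 where g1: "pdeg (n - 1) g1" "\<forall>X\<in>carrier R. f X = f a \<oplus> (X \<ominus> a) \<otimes> g1 X"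
    using pmono.IH by blast
  have "pdeg (Suc n - 1) g1" using g1(1) by (rule pdeg_mono_le) simp
  with g1(2) show ?case by blast
next
  case (pcong n f g)
  obtain g1 where g1: "pdeg (n - 1) g1" "\<forall>X\<in>carrier R. f X = f a \<oplus> (X \<ominus> a) \<otimes> g1 X"
    using pcong.IH by blast
  show ?case
  proof (intro exI[of _ g1] conjI ballI)
    show "pdeg (n - 1) g1" by (rule g1(1))
    fix X assume X: "X \<in> carrier R"
    have e: "f X = f a \<oplus> (X \<ominus> a) \<otimes> g1 X" using g1(2) X by blast
    have "g X = f X" "g a = f a" using pcong.hyps(2) X assms(2) by auto
    then show "g X = g a \<oplus> (X \<ominus> a) \<otimes> g1 X" using e by simp
  qed
qed

lemma pdeg_roots:
  assumes "pdeg n f" "finite Z" "Z \<subseteq> carrier R" "n < card Z" "\<forall>z\<in>Z. f z = \<zero>"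
    "X \<in> carrier R"
  shows "f X = \<zero>"
  using assms
proof (induction n arbitrary: f Z X)
  case 0
  then obtain z where z: "z \<in> Z" by fastforce
  then show ?case using pdeg0_const[OF 0(1) 0(6), of z] 0 by auto
next
  case (Suc n)
  then obtain z where z: "z \<in> Z" by fastforce
  then have zc: "z \<in> carrier R" using Suc by auto
  obtain g where g: "pdeg n g" "\<forall>X\<in>carrier R. f X = f z \<oplus> (X \<ominus> z) \<otimes> g X"
    using pdeg_factor[OF Suc(2) zc] by auto
  have fz: "f z = \<zero>" using Suc z by auto
  have gz: "\<forall>y\<in>Z - {z}. g y = \<zero>"
  proof
    fix y assume y: "y \<in> Z - {z}"
    then have yc: "y \<in> carrier R" using Suc by auto
    have gy: "g y \<in> carrier R" using pdeg_carrier g(1) yc by auto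
    have "f y = f z \<oplus> (y \<ominus> z) \<otimes> g y" using g(2) yc by blast
    moreover have "f y = \<zero>" using Suc(6) y by blast
    ultimately have "\<zero> = (y \<ominus> z) \<otimes> g y" using fz gy yc zc by simp
    moreover have "y \<ominus> z \<noteq> \<zero>" using y yc zc by (simp add: minus_zero_iff)
    ultimately show "g y = \<zero>" using integral_iff gy yc zc by (metis minus_closed)
  qed
  have cz: "n < card (Z - {z})" using Suc(3,5) z by simp
  have "g X = \<zero>"
    using Suc.IH[OF g(1), of "Z - {z}" X] Suc(3,4,7) cz gz by auto
  moreover have "f X = f z \<oplus> (X \<ominus> z) \<otimes> g X" using g(2) Suc(7) by blast
  ultimately show ?case using fz zc Suc(7) by simp
qed


lemma pdeg_finsum:
  assumes "finite I" "\<And>i. i \<in> I \<Longrightarrow> pdeg n (f i)"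
  shows "pdeg n (\<lambda>X. \<Oplus>i\<in>I. f i X)"
  using assms
proof (induction I rule: finite_induct)
  case empty
  show ?case by (rule pcong[OF pconst[OF zero_closed]]) simp
next
  case (insert x F)
  have "pdeg n (\<lambda>X. f x X \<oplus> (\<Oplus>i\<in>F. f i X))"
    using insert by (intro padd) auto
  then show ?case
  proof (rule pcong)
    fix X assume X: "X \<in> carrier R"
    have "(\<lambda>i. f i X) \<in> insert x F \<rightarrow> carrier R"
      using insert.prems pdeg_carrier X by blast
    then show "(\<Oplus>i\<in>insert x F. f i X) = f x X \<oplus> (\<Oplus>i\<in>F. f i X)"
      using insert.hyps by (subst finsum_insert) auto
  qed
qed

lemma pdeg_finprod_lin:
  assumes "finite S" "\<And>l. l \<in> S \<Longrightarrow> b l \<in> carrier R" "\<And>l. l \<in> S \<Longrightarrow> d l \<in> carrier R"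
  shows "pdeg (card S) (\<lambda>X. \<Otimes>l\<in>S. (X \<ominus> b l) \<otimes> d l)"
  using assms
proof (induction S rule: finite_induct)
  case empty
  show ?case by (rule pcong[OF pconst[OF one_closed]]) simp
next
  case (insert x F)
  have "pdeg (Suc (card F)) (\<lambda>X. (X \<ominus> b x) \<otimes> (d x \<otimes> (\<Otimes>l\<in>F. (X \<ominus> b l) \<otimes> d l)))"
    using insert by (intro plin pscal) auto
  then have "pdeg (Suc (card F)) (\<lambda>X. \<Otimes>l\<in>insert x F. (X \<ominus> b l) \<otimes> d l)"
  proof (rule pcong)
    fix X assume X: "X \<in> carrier R"
    have "(\<lambda>l. (X \<ominus> b l) \<otimes> d l) \<in> insert x F \<rightarrow> carrier R"
      using insert.prems X by auto
    then have "(\<Otimes>l\<in>insert x F. (X \<ominus> b l) \<otimes> d l) = ((X \<ominus> b x) \<otimes> d x) \<otimes> (\<Otimes>l\<in>F. (X \<ominus> b l) \<otimes> d l)"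
      using insert.hyps by (subst finprod_insert) auto
    also have "\<dots> = (X \<ominus> b x) \<otimes> (d x \<otimes> (\<Otimes>l\<in>F. (X \<ominus> b l) \<otimes> d l))"
      using X insert.prems by (simp add: m_assoc)
    finally show "(\<Otimes>l\<in>insert x F. (X \<ominus> b l) \<otimes> d l) = (X \<ominus> b x) \<otimes> (d x \<otimes> (\<Otimes>l\<in>F. (X \<ominus> b l) \<otimes> d l))" .
  qed
  then show ?case using insert.hyps by simp
qed

lemma finprod_zero_factor:
  assumes "finite A" "i \<in> A" "f \<in> A \<rightarrow> carrier R" "f i = \<zero>"
  shows "finprod R f A = \<zero>"
proof -
  have "finprod R f A = finprod R f (insert i (A - {i}))" using assms(2) by (simp add: insert_absorb)
  also have "\<dots> = f i \<otimes> finprod R f (A - {i})"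
    using assms by (subst finprod_insert) auto
  also have "\<dots> = \<zero>"
  proof -
    have "finprod R f (A - {i}) \<in> carrier R" using assms(3) by (intro finprod_closed) auto
    then show ?thesis using assms(4) by simp
  qed
  finally show ?thesis .
qed

definition LB :: "'a set \<Rightarrow> 'a \<Rightarrow> 'a \<Rightarrow> 'a" where
  "LB I i X = (\<Otimes>l\<in>I - {i}. (X \<ominus> l) \<otimes> inv (i \<ominus> l))"

lemma diff_inv_closed:
  assumes "i \<in> carrier R" "l \<in> carrier R" "i \<noteq> l"
  shows "inv (i \<ominus> l) \<in> carrier R" "(i \<ominus> l) \<otimes> inv (i \<ominus> l) = \<one>"
proof -
  have "i \<ominus> l \<in> Units R" using assms field_Units minus_zero_iff by auto
  then show "inv (i \<ominus> l) \<in> carrier R" "(i \<ominus> l) \<otimes> inv (i \<ominus> l) = \<one>" by auto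
qed

lemma LB_pdeg:
  assumes "finite I" "I \<subseteq> carrier R" "i \<in> I"
  shows "pdeg (card I - 1) (LB I i)"
proof -
  have "pdeg (card (I - {i})) (\<lambda>X. \<Otimes>l\<in>I - {i}. (X \<ominus> l) \<otimes> inv (i \<ominus> l))"
    using assms by (intro pdeg_finprod_lin) (auto intro!: diff_inv_closed(1))
  then show ?thesis using assms unfolding LB_def by simp
qed

lemma LB_carrier:
  assumes "finite I" "I \<subseteq> carrier R" "i \<in> I" "X \<in> carrier R"
  shows "LB I i X \<in> carrier R"
  using pdeg_carrier[OF LB_pdeg[OF assms(1-3)] assms(4)] .

lemma LB_at:
  assumes "finite I" "I \<subseteq> carrier R" "i \<in> I" "t \<in> I"
  shows "LB I i t = (if t = i then \<one> else \<zero>)"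
proof (cases "t = i")
  case True
  have IC: "\<And>l. l \<in> I \<Longrightarrow> l \<in> carrier R" using assms(2) by auto
  have "LB I i t = (\<Otimes>l\<in>I - {i}. \<one>)"
    unfolding LB_def using assms True
    by (intro finprod_cong') (auto simp: Pi_def IC diff_inv_closed)
  then show ?thesis using True by simp
next
  case False
  have IC: "\<And>l. l \<in> I \<Longrightarrow> l \<in> carrier R" using assms(2) by auto
  have tt: "t \<ominus> t = \<zero>" using minus_zero_iff IC assms(4) by auto
  have ic: "inv (i \<ominus> t) \<in> carrier R" using IC assms(3,4) False diff_inv_closed by auto
  have "LB I i t = \<zero>" unfolding LB_def
    using assms False
    by (intro finprod_zero_factor[of _ t]) (auto simp: Pi_def IC diff_inv_closed tt ic)
  then show ?thesis using False by simp
qed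

lemma lagrange:
  assumes "finite I" "I \<subseteq> carrier R" "I \<noteq> {}" "pdeg (card I - 1) f" "X \<in> carrier R"
  shows "f X = (\<Oplus>i\<in>I. f i \<otimes> LB I i X)"
proof -
  define D where "D = (\<lambda>X. (\<Oplus>i\<in>I. f i \<otimes> LB I i X) \<oplus> (\<ominus> \<one>) \<otimes> f X)"
  have fi: "\<And>i. i \<in> I \<Longrightarrow> f i \<in> carrier R" using assms pdeg_carrier by blast
  have p1: "pdeg (card I - 1) (\<lambda>X. \<Oplus>i\<in>I. f i \<otimes> LB I i X)"
  proof (rule pdeg_finsum[OF assms(1)])
    fix i assume i: "i \<in> I"
    show "pdeg (card I - 1) (\<lambda>X. f i \<otimes> LB I i X)"
      by (rule pscal[OF LB_pdeg[OF assms(1,2) i] fi[OF i]])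
  qed
  have p2: "pdeg (card I - 1) (\<lambda>X. (\<ominus> \<one>) \<otimes> f X)"
    by (rule pscal[OF assms(4)]) simp
  have pD: "pdeg (card I - 1) D" unfolding D_def by (rule padd[OF p1 p2])
  have DZ: "\<forall>z\<in>I. D z = \<zero>"
  proof
    fix z assume z: "z \<in> I"
    have zc: "z \<in> carrier R" using z assms by auto
    have "(\<Oplus>i\<in>I. f i \<otimes> LB I i z) = (\<Oplus>i\<in>I. if z = i then f i else \<zero>)"
    proof (rule finsum_cong')
      show "(\<lambda>i. if z = i then f i else \<zero>) \<in> I \<rightarrow> carrier R" using fi by auto
      fix i assume i: "i \<in> I"
      show "f i \<otimes> LB I i z = (if z = i then f i else \<zero>)"
        using LB_at[OF assms(1,2) i z] fi[OF i] by auto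
    qed simp
    also have "\<dots> = f z" using z assms fi by (intro finsum_singleton) auto
    finally have e: "(\<Oplus>i\<in>I. f i \<otimes> LB I i z) = f z" .
    have fz: "f z \<in> carrier R" using fi z by blast
    show "D z = \<zero>" unfolding D_def e using fz by (simp add: l_minus r_neg)
  qed
  have "D X = \<zero>"
    by (rule pdeg_roots[OF pD assms(1,2) _ DZ assms(5)]) (use assms(1,3) in \<open>simp add: card_gt_0_iff\<close>)
  moreover have Sc: "(\<Oplus>i\<in>I. f i \<otimes> LB I i X) \<in> carrier R"
    using assms fi LB_carrier by (intro finsum_closed) auto
  moreover have fX: "f X \<in> carrier R" using assms pdeg_carrier by blast
  ultimately have e0: "(\<Oplus>i\<in>I. f i \<otimes> LB I i X) \<oplus> (\<ominus> \<one>) \<otimes> f X = \<zero>" unfolding D_def by simp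
  have "(\<Oplus>i\<in>I. f i \<otimes> LB I i X) = ((\<Oplus>i\<in>I. f i \<otimes> LB I i X) \<oplus> (\<ominus> \<one>) \<otimes> f X) \<oplus> f X"
    using Sc fX by (simp add: l_minus a_assoc l_neg)
  also have "\<dots> = f X" unfolding e0 using fX by simp
  finally show ?thesis by simp
qed


lemma pdeg_monom: "pdeg l (\<lambda>X. X [^] l)"
proof (induction l)
  case 0
  show ?case by (rule pcong[OF pconst[OF one_closed]]) simp
next
  case (Suc l)
  have "pdeg (Suc l) (\<lambda>X. (X \<ominus> \<zero>) \<otimes> X [^] l)" by (rule plin[OF Suc]) simp
  then show ?case
  proof (rule pcong)
    fix X assume X: "X \<in> carrier R"
    then show "X [^] Suc l = (X \<ominus> \<zero>) \<otimes> X [^] l"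
      by (simp add: a_minus_def m_comm)
  qed
qed

definition coefP :: "'a list \<Rightarrow> 'a \<Rightarrow> nat \<Rightarrow> 'a" where
  "coefP w k l = (if l = 0 then k else if l \<le> length w then w ! (l - 1) else \<zero>)"

definition Pw :: "'a list \<Rightarrow> 'a \<Rightarrow> 'a \<Rightarrow> 'a" where
  "Pw w k X = (\<Oplus>l\<in>{..length w}. coefP w k l \<otimes> X [^] l)"

lemma coefP_carrier: "set w \<subseteq> carrier R \<Longrightarrow> k \<in> carrier R \<Longrightarrow> coefP w k l \<in> carrier R"
  unfolding coefP_def by (auto dest: nth_mem)

lemma Pw_pdeg:
  assumes "set w \<subseteq> carrier R" "k \<in> carrier R"
  shows "pdeg (length w) (Pw w k)"
proof -
  have "pdeg (length w) (\<lambda>X. \<Oplus>l\<in>{..length w}. coefP w k l \<otimes> X [^] l)"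
  proof (rule pdeg_finsum)
    fix l assume l: "l \<in> {..length w}"
    have "pdeg l (\<lambda>X. coefP w k l \<otimes> X [^] l)"
      by (rule pscal[OF pdeg_monom coefP_carrier[OF assms]])
    then show "pdeg (length w) (\<lambda>X. coefP w k l \<otimes> X [^] l)"
      by (rule pdeg_mono_le) (use l in auto)
  qed simp
  then show ?thesis unfolding Pw_def[abs_def] .
qed

lemma Pw_carrier:
  assumes "set w \<subseteq> carrier R" "k \<in> carrier R" "X \<in> carrier R"
  shows "Pw w k X \<in> carrier R"
  using pdeg_carrier[OF Pw_pdeg[OF assms(1,2)] assms(3)] .

lemma Pw_split:
  assumes "set w \<subseteq> carrier R" "k \<in> carrier R" "X \<in> carrier R"
  shows "Pw w k X = k \<oplus> Pw w \<zero> X"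
proof -
  have "Pw w k X = (\<Oplus>l\<in>{..length w}. (if 0 = l then k else \<zero>) \<oplus> coefP w \<zero> l \<otimes> X [^] l)"
    unfolding Pw_def
  proof (rule finsum_cong')
    show "(\<lambda>l. (if 0 = l then k else \<zero>) \<oplus> coefP w \<zero> l \<otimes> X [^] l) \<in> {..length w} \<rightarrow> carrier R"
      using assms coefP_carrier by auto
    have wc: "\<And>l. 0 < l \<Longrightarrow> l \<le> length w \<Longrightarrow> w ! (l - Suc 0) \<in> carrier R"
      using assms(1) by (auto intro!: subsetD[OF assms(1)] nth_mem)
    fix l show "coefP w k l \<otimes> X [^] l = (if 0 = l then k else \<zero>) \<oplus> coefP w \<zero> l \<otimes> X [^] l"
      using assms wc by (auto simp: coefP_def)
  qed simp
  also have "\<dots> = (\<Oplus>l\<in>{..length w}. (if 0 = l then k else \<zero>)) \<oplus> (\<Oplus>l\<in>{..length w}. coefP w \<zero> l \<otimes> X [^] l)"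
    using assms coefP_carrier by (intro finsum_addf) auto
  also have "(\<Oplus>l\<in>{..length w}. (if 0 = l then k else \<zero>)) = k"
    using assms finsum_singleton[of 0 "{..length w}" "\<lambda>_. k"] by auto
  finally show ?thesis unfolding Pw_def by simp
qed

lemma coeff_zero:
  "(\<forall>l\<le>n. d l \<in> carrier R) \<Longrightarrow> Suc n < card (carrier R) \<Longrightarrow>
   (\<forall>X\<in>carrier R. (\<Oplus>l\<in>{..n}. d l \<otimes> X [^] l) = \<zero>) \<Longrightarrow> \<forall>l\<le>n. d l = \<zero>"
proof (induction n arbitrary: d)
  case 0
  have "(\<Oplus>l\<in>{..0::nat}. d l \<otimes> \<zero> [^] l) = d 0" using 0 by simp
  then show ?case using 0 by auto
next
  case (Suc n)
  have fin: "finite (carrier R)" using Suc.prems(2) card.infinite by fastforce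
  have split: "\<And>X. X \<in> carrier R \<Longrightarrow> (\<Oplus>l\<in>{..Suc n}. d l \<otimes> X [^] l) =
      X \<otimes> (\<Oplus>l\<in>{..n}. d (Suc l) \<otimes> X [^] l) \<oplus> d 0"
  proof -
    fix X assume X: "X \<in> carrier R"
    have "(\<Oplus>l\<in>{..Suc n}. d l \<otimes> X [^] l) = (\<Oplus>l\<in>{..n}. d (Suc l) \<otimes> X [^] Suc l) \<oplus> d 0 \<otimes> X [^] (0::nat)"
      using Suc.prems(1) X by (intro finsum_Suc2) auto
    also have "(\<Oplus>l\<in>{..n}. d (Suc l) \<otimes> X [^] Suc l) = (\<Oplus>l\<in>{..n}. X \<otimes> (d (Suc l) \<otimes> X [^] l))"
      using Suc.prems(1) X by (intro finsum_cong') (auto simp: m_ac)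
    also have "\<dots> = X \<otimes> (\<Oplus>l\<in>{..n}. d (Suc l) \<otimes> X [^] l)"
      using Suc.prems(1) X by (intro finsum_rdistr[symmetric]) auto
    finally show "(\<Oplus>l\<in>{..Suc n}. d l \<otimes> X [^] l) = X \<otimes> (\<Oplus>l\<in>{..n}. d (Suc l) \<otimes> X [^] l) \<oplus> d 0"
      using Suc.prems(1) by simp
  qed
  have gc: "\<And>X. X \<in> carrier R \<Longrightarrow> (\<Oplus>l\<in>{..n}. d (Suc l) \<otimes> X [^] l) \<in> carrier R"
    using Suc.prems(1) by (intro finsum_closed) auto
  have a0: "(\<Oplus>l\<in>{..Suc n}. d l \<otimes> \<zero> [^] l) = \<zero>" using Suc.prems(3) zero_closed by blast
  have e0: "\<zero> \<otimes> (\<Oplus>l\<in>{..n}. d (Suc l) \<otimes> \<zero> [^] l) \<oplus> d 0 = \<zero>"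
    using trans[OF sym[OF split[OF zero_closed]] a0] .
  have d0: "d 0 = \<zero>"
    using e0 gc[of \<zero>] Suc.prems(1) by simp
  have g0: "\<forall>z\<in>carrier R - {\<zero>}. (\<Oplus>l\<in>{..n}. d (Suc l) \<otimes> z [^] l) = \<zero>"
  proof
    fix z assume z: "z \<in> carrier R - {\<zero>}"
    have zc: "z \<in> carrier R" using z by blast
    have az: "(\<Oplus>l\<in>{..Suc n}. d l \<otimes> z [^] l) = \<zero>" using Suc.prems(3) zc by blast
    have "z \<otimes> (\<Oplus>l\<in>{..n}. d (Suc l) \<otimes> z [^] l) \<oplus> d 0 = \<zero>"
      using trans[OF sym[OF split[OF zc]] az] .
    then have "z \<otimes> (\<Oplus>l\<in>{..n}. d (Suc l) \<otimes> z [^] l) = \<zero>"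
      using gc[of z] z d0 by simp
    then show "(\<Oplus>l\<in>{..n}. d (Suc l) \<otimes> z [^] l) = \<zero>"
      using integral_iff gc[of z] z by auto
  qed
  have pg: "pdeg n (\<lambda>X. \<Oplus>l\<in>{..n}. d (Suc l) \<otimes> X [^] l)"
  proof (rule pdeg_finsum)
    fix l assume l: "l \<in> {..n}"
    have "pdeg l (\<lambda>X. d (Suc l) \<otimes> X [^] l)"
      by (rule pscal[OF pdeg_monom]) (use Suc.prems(1) l in auto)
    then show "pdeg n (\<lambda>X. d (Suc l) \<otimes> X [^] l)"
      by (rule pdeg_mono_le) (use l in auto)
  qed simp
  have "\<forall>X\<in>carrier R. (\<Oplus>l\<in>{..n}. d (Suc l) \<otimes> X [^] l) = \<zero>"
  proof
    fix X assume X: "X \<in> carrier R"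
    show "(\<Oplus>l\<in>{..n}. d (Suc l) \<otimes> X [^] l) = \<zero>"
    proof (rule pdeg_roots[OF pg _ _ _ g0 X])
      show "finite (carrier R - {\<zero>})" using fin by simp
      show "n < card (carrier R - {\<zero>})" using Suc.prems(2) fin by simp
    qed auto
  qed
  moreover have "\<forall>l\<le>n. d (Suc l) \<in> carrier R" using Suc.prems(1) by simp
  moreover have "Suc n < card (carrier R)" using Suc.prems(2) by simp
  ultimately have "\<forall>l\<le>n. d (Suc l) = \<zero>"
    using Suc.IH[of "\<lambda>l. d (Suc l)"] by blast
  then show ?case
  proof (intro allI impI)
    fix l assume l: "l \<le> Suc n" and h: "\<forall>l\<le>n. d (Suc l) = \<zero>"
    show "d l = \<zero>"
    proof (cases l)
      case 0 then show ?thesis using d0 by simp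
    next
      case (Suc l') then show ?thesis using l h by auto
    qed
  qed
qed


lemma neg_one_eq:
  assumes "a \<in> carrier R" "b \<in> carrier R"
  shows "a \<oplus> (\<ominus> \<one>) \<otimes> b = \<zero> \<longleftrightarrow> a = b"
proof -
  have "(\<ominus> \<one>) \<otimes> b = \<ominus> b" using assms by (simp add: l_minus)
  then have "a \<oplus> (\<ominus> \<one>) \<otimes> b = a \<ominus> b" by (simp add: minus_eq)
  then show ?thesis using minus_zero_iff[OF assms] by simp
qed

lemma Pw_eq_on:
  assumes "set w \<subseteq> carrier R" "set w' \<subseteq> carrier R" "length w = n" "length w' = n"
    "k \<in> carrier R" "k' \<in> carrier R" "finite Z" "Z \<subseteq> carrier R" "n < card Z"
    "\<forall>z\<in>Z. Pw w k z = Pw w' k' z" "X \<in> carrier R"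
  shows "Pw w k X = Pw w' k' X"
proof -
  define D where "D = (\<lambda>X. Pw w k X \<oplus> (\<ominus> \<one>) \<otimes> Pw w' k' X)"
  have "pdeg n D" unfolding D_def
    using Pw_pdeg[OF assms(1,5)] Pw_pdeg[OF assms(2,6)] assms(3,4)
    by (intro padd pscal) auto
  moreover have "\<forall>z\<in>Z. D z = \<zero>"
  proof
    fix z assume z: "z \<in> Z"
    then have zc: "z \<in> carrier R" using assms(8) by auto
    show "D z = \<zero>" unfolding D_def
      using neg_one_eq[OF Pw_carrier[OF assms(1,5) zc] Pw_carrier[OF assms(2,6) zc]] assms(10) z by auto
  qed
  ultimately have "D X = \<zero>" using pdeg_roots assms(7,8,9,11) by blast
  then show ?thesis unfolding D_def
    using neg_one_eq[OF Pw_carrier[OF assms(1,5,11)] Pw_carrier[OF assms(2,6,11)]] by auto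
qed

lemma Pw_inj:
  assumes "set w \<subseteq> carrier R" "set w' \<subseteq> carrier R" "length w = n" "length w' = n"
    "k \<in> carrier R" "k' \<in> carrier R" "Suc n < card (carrier R)"
    "\<forall>X\<in>carrier R. Pw w k X = Pw w' k' X"
  shows "w = w'"
proof -
  define d where "d = (\<lambda>l. coefP w k l \<oplus> (\<ominus> \<one>) \<otimes> coefP w' k' l)"
  have cw: "\<And>l. coefP w k l \<in> carrier R" using coefP_carrier[OF assms(1,5)] .
  have cw': "\<And>l. coefP w' k' l \<in> carrier R" using coefP_carrier[OF assms(2,6)] .
  have dc: "\<forall>l\<le>n. d l \<in> carrier R" unfolding d_def using cw cw' by auto
  have "\<forall>X\<in>carrier R. (\<Oplus>l\<in>{..n}. d l \<otimes> X [^] l) = \<zero>"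
  proof
    fix X assume X: "X \<in> carrier R"
    have "(\<Oplus>l\<in>{..n}. d l \<otimes> X [^] l) =
        (\<Oplus>l\<in>{..n}. coefP w k l \<otimes> X [^] l \<oplus> (\<ominus> \<one>) \<otimes> (coefP w' k' l \<otimes> X [^] l))"
      unfolding d_def using X cw cw'
      by (intro finsum_cong') (auto simp: l_distr m_assoc)
    also have "\<dots> = (\<Oplus>l\<in>{..n}. coefP w k l \<otimes> X [^] l) \<oplus> (\<Oplus>l\<in>{..n}. (\<ominus> \<one>) \<otimes> (coefP w' k' l \<otimes> X [^] l))"
      using X cw cw' by (intro finsum_addf) auto
    also have "(\<Oplus>l\<in>{..n}. (\<ominus> \<one>) \<otimes> (coefP w' k' l \<otimes> X [^] l)) = (\<ominus> \<one>) \<otimes> (\<Oplus>l\<in>{..n}. coefP w' k' l \<otimes> X [^] l)"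
      using X cw' by (intro finsum_rdistr[symmetric]) auto
    finally have "(\<Oplus>l\<in>{..n}. d l \<otimes> X [^] l) = Pw w k X \<oplus> (\<ominus> \<one>) \<otimes> Pw w' k' X"
      unfolding Pw_def using assms(3,4) by simp
    then show "(\<Oplus>l\<in>{..n}. d l \<otimes> X [^] l) = \<zero>"
      using neg_one_eq[OF Pw_carrier[OF assms(1,5) X] Pw_carrier[OF assms(2,6) X]] assms(8) X by auto
  qed
  then have d0: "\<forall>l\<le>n. d l = \<zero>" using coeff_zero[OF dc assms(7)] by blast
  show ?thesis
  proof (rule nth_equalityI)
    show "length w = length w'" using assms(3,4) by simp
    fix i assume i: "i < length w"
    have "d (Suc i) = \<zero>" using d0 i assms(3) by auto
    then have "coefP w k (Suc i) = coefP w' k' (Suc i)" unfolding d_def using neg_one_eq cw cw' by auto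
    then show "w ! i = w' ! i" using i assms(3,4) by (simp add: coefP_def)
  qed
qed

end


lemma run_edges_append:
  "run_edges s encE (xs @ ys) w \<rho> V = run_edges s encE ys w \<rho> (run_edges s encE xs w \<rho> V)"
  by (induction xs arbitrary: V) auto

fun good :: "node \<Rightarrow> (node \<times> node \<Rightarrow> local_info \<Rightarrow> nat) \<Rightarrow> nat list \<Rightarrow> (node \<Rightarrow> nat)
    \<Rightarrow> (node \<times> node \<Rightarrow> nat) \<Rightarrow> (node \<times> node) set \<Rightarrow> (node \<times> node) list list \<Rightarrow> bool" where
  "good s encE w \<rho> val D [] = True"
| "good s encE w \<rho> val D (b # bs) =
    ((\<forall>e\<in>set b. \<forall>V'. (\<forall>e'\<in>D. V' e' = Some (val e')) \<longrightarrow> encE e (local_view s (fst e) w \<rho> V') = val e)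
     \<and> good s encE w \<rho> val (D \<union> set b) bs)"

lemma run_block:
  assumes "\<forall>e\<in>D. V e = Some (val e)"
    "\<forall>e\<in>set xs. \<forall>V'. (\<forall>e'\<in>D. V' e' = Some (val e')) \<longrightarrow> encE e (local_view s (fst e) w \<rho> V') = val e"
  shows "(\<forall>e\<in>D \<union> set xs. run_edges s encE xs w \<rho> V e = Some (val e)) \<and>
         (\<forall>e. e \<notin> set xs \<longrightarrow> run_edges s encE xs w \<rho> V e = V e)"
  using assms
proof (induction xs arbitrary: V)
  case Nil
  then show ?case by simp
next
  case (Cons x xs)
  let ?V1 = "V(x := Some (encE x (local_view s (fst x) w \<rho> V)))"
  have ex: "encE x (local_view s (fst x) w \<rho> V) = val x" using Cons.prems by simp
  have V1: "\<forall>e\<in>D. ?V1 e = Some (val e)" using Cons.prems(1) ex by simp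
  have IH: "(\<forall>e\<in>D \<union> set xs. run_edges s encE xs w \<rho> ?V1 e = Some (val e)) \<and>
         (\<forall>e. e \<notin> set xs \<longrightarrow> run_edges s encE xs w \<rho> ?V1 e = ?V1 e)"
  proof -
    have P2: "\<forall>e\<in>set xs. \<forall>V'. (\<forall>e'\<in>D. V' e' = Some (val e')) \<longrightarrow> encE e (local_view s (fst e) w \<rho> V') = val e"
      using Cons.prems(2) by simp
    show ?thesis using Cons.IH[OF V1 P2] .
  qed
  show ?case
  proof (intro conjI allI impI ballI)
    fix e assume "e \<in> D \<union> set (x # xs)"
    then show "run_edges s encE (x # xs) w \<rho> V e = Some (val e)"
    proof (cases "e \<in> set xs")
      case True then show ?thesis using IH \<open>e \<in> D \<union> set (x # xs)\<close> by simp
    next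
      case False
      then have "run_edges s encE xs w \<rho> ?V1 e = ?V1 e" using IH by blast
      moreover have "?V1 e = Some (val e)"
        using False \<open>e \<in> D \<union> set (x # xs)\<close> ex Cons.prems(1) by auto
      ultimately show ?thesis by simp
    qed
  next
    fix e assume e: "e \<notin> set (x # xs)"
    then have e1: "e \<notin> set xs" "e \<noteq> x" by auto
    then have "run_edges s encE xs w \<rho> ?V1 e = ?V1 e" using IH by blast
    then show "run_edges s encE (x # xs) w \<rho> V e = V e" using e1 by simp
  qed
qed

lemma run_blocks:
  assumes "good s encE w \<rho> val D bs" "\<forall>e\<in>D. V e = Some (val e)"
  shows "(\<forall>e\<in>D \<union> set (concat bs). run_edges s encE (concat bs) w \<rho> V e = Some (val e)) \<and>
         (\<forall>e. e \<notin> set (concat bs) \<longrightarrow> run_edges s encE (concat bs) w \<rho> V e = V e)"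
  using assms
proof (induction bs arbitrary: D V)
  case Nil
  then show ?case by simp
next
  case (Cons b bs)
  let ?V1 = "run_edges s encE b w \<rho> V"
  have B: "(\<forall>e\<in>D \<union> set b. ?V1 e = Some (val e)) \<and> (\<forall>e. e \<notin> set b \<longrightarrow> ?V1 e = V e)"
    using run_block[OF Cons.prems(2)] Cons.prems(1) by simp
  have IH: "(\<forall>e\<in>(D \<union> set b) \<union> set (concat bs). run_edges s encE (concat bs) w \<rho> ?V1 e = Some (val e)) \<and>
         (\<forall>e. e \<notin> set (concat bs) \<longrightarrow> run_edges s encE (concat bs) w \<rho> ?V1 e = ?V1 e)"
    using Cons.IH[of "D \<union> set b" ?V1] Cons.prems(1) B by simp
  show ?case using IH B by (auto simp: run_edges_append)
qed

lemma exec_round_blocks: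
  assumes "good s encE w \<rho> val {} bs"
  shows "exec_round s encE (concat bs) w \<rho> = (\<lambda>e. if e \<in> set (concat bs) then Some (val e) else None)"
proof
  fix e
  have "(\<forall>e\<in>{} \<union> set (concat bs). run_edges s encE (concat bs) w \<rho> (\<lambda>_. None) e = Some (val e)) \<and>
        (\<forall>e. e \<notin> set (concat bs) \<longrightarrow> run_edges s encE (concat bs) w \<rho> (\<lambda>_. None) e = None)"
    using run_blocks[OF assms, of "\<lambda>_. None"] by simp
  then have a: "\<forall>e\<in>set (concat bs). run_edges s encE (concat bs) w \<rho> (\<lambda>_. None) e = Some (val e)"
    and b: "\<forall>e. e \<notin> set (concat bs) \<longrightarrow> run_edges s encE (concat bs) w \<rho> (\<lambda>_. None) e = None" by auto
  show "exec_round s encE (concat bs) w \<rho> e = (if e \<in> set (concat bs) then Some (val e) else None)"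
    unfolding exec_round_def
  proof (cases "e \<in> set (concat bs)")
    case True then show "run_edges s encE (concat bs) w \<rho> (\<lambda>_. None) e = (if e \<in> set (concat bs) then Some (val e) else None)"
      using a by auto
  next
    case False
    then have "run_edges s encE (concat bs) w \<rho> (\<lambda>_. None) e = None" using b by blast
    then show "run_edges s encE (concat bs) w \<rho> (\<lambda>_. None) e = (if e \<in> set (concat bs) then Some (val e) else None)"
      using False by simp
  qed
qed

lemma card_eq_by_bij:
  assumes "\<forall>\<rho>\<in>A. \<phi> \<rho> \<in> A" "\<forall>\<rho>\<in>A. \<psi> \<rho> \<in> A" "\<forall>\<rho>\<in>A. \<psi> (\<phi> \<rho>) = \<rho>" "\<forall>\<rho>\<in>A. \<phi> (\<psi> \<rho>) = \<rho>"
    "\<forall>\<rho>\<in>A. g (\<phi> \<rho>) = f \<rho>"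
  shows "card {\<rho>\<in>A. f \<rho> = x} = card {\<rho>\<in>A. g \<rho> = x}"
proof -
  have "bij_betw \<phi> {\<rho>\<in>A. f \<rho> = x} {\<rho>\<in>A. g \<rho> = x}"
  proof (rule bij_betw_byWitness[where f'=\<psi>])
    show "\<forall>a\<in>{\<rho> \<in> A. f \<rho> = x}. \<psi> (\<phi> a) = a" using assms by auto
    show "\<forall>a'\<in>{\<rho> \<in> A. g \<rho> = x}. \<phi> (\<psi> a') = a'" using assms by auto
    show "\<phi> ` {\<rho> \<in> A. f \<rho> = x} \<subseteq> {\<rho> \<in> A. g \<rho> = x}" using assms by auto
    show "\<psi> ` {\<rho> \<in> A. g \<rho> = x} \<subseteq> {\<rho> \<in> A. f \<rho> = x}"
    proof
      fix y assume "y \<in> \<psi> ` {\<rho> \<in> A. g \<rho> = x}"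
      then obtain r where r: "r \<in> A" "g r = x" "y = \<psi> r" by auto
      have "g (\<phi> (\<psi> r)) = f (\<psi> r)" using assms(2,5) r(1) by blast
      moreover have "\<phi> (\<psi> r) = r" using assms(4) r(1) by blast
      ultimately have "f y = x" using r by simp
      then show "y \<in> {\<rho> \<in> A. f \<rho> = x}" using r assms(2) by auto
    qed
  qed
  then show ?thesis by (rule bij_betw_same_card)
qed



definition lst :: "'b set \<Rightarrow> 'b list" where "lst X = (SOME xs. distinct xs \<and> set xs = X)"

lemma lst: "finite X \<Longrightarrow> distinct (lst X) \<and> set (lst X) = X"
  unfolding lst_def by (rule someI_ex) (metis finite_distinct_list)

locale ccn = field F for F :: "nat ring" (structure) +
  fixes m h q :: nat
  assumes carr: "carrier F = {..<q}" and mq: "m < q" and h2: "2 \<le> h" and hm: "h + 1 \<le> m"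
begin

definition R0 :: node where "R0 = Rcv {1..h}"
definition Hs :: "(nat \<Rightarrow> nat) set" where
  "Hs = {n \<in> {1..h} \<rightarrow>\<^sub>E carrier F. finsum F n {1..h} = \<zero>\<^bsub>F\<^esub>}"
definition enumH :: "nat \<Rightarrow> nat \<Rightarrow> nat" where "enumH = (SOME f. bij_betw f {..<card Hs} Hs)"
definition nz :: "(node \<Rightarrow> nat) \<Rightarrow> nat \<Rightarrow> nat" where "nz \<rho> = enumH (\<rho> R0)"
definition kk :: "node \<Rightarrow> nat" where "kk u = (if u = Src then q else if u = R0 then card Hs else 1)"
definition Lc :: "nat \<Rightarrow> nat \<Rightarrow> nat" where "Lc j i = LB {1..h} i j"
definition clamp :: "nat \<Rightarrow> nat" where "clamp v = (if v \<in> carrier F then v else \<zero>\<^bsub>F\<^esub>)"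

lemma pt_carrier: "t \<le> m \<Longrightarrow> t \<in> carrier F"
  unfolding carr using mq by simp

lemma pts_carrier: "{1..h} \<subseteq> carrier F"
  unfolding carr using mq hm by auto

lemma Hs_finite: "finite Hs"
proof -
  have fc: "finite (carrier F)" unfolding carr by simp
  have "finite ({1..h} \<rightarrow>\<^sub>E carrier F)" using fc by (intro finite_PiE) auto
  then show ?thesis unfolding Hs_def by simp
qed

lemma zero_in_Hs: "(\<lambda>i\<in>{1..h}. \<zero>\<^bsub>F\<^esub>) \<in> Hs"
proof -
  have "finsum F (\<lambda>i\<in>{1..h}. \<zero>\<^bsub>F\<^esub>) {1..h} = finsum F (\<lambda>i. \<zero>\<^bsub>F\<^esub>) {1..h}"
    by (intro finsum_cong') auto
  then show ?thesis unfolding Hs_def by auto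
qed

lemma Hs_card: "0 < card Hs"
  using Hs_finite zero_in_Hs card_gt_0_iff by blast

lemma enumH_bij: "bij_betw enumH {..<card Hs} Hs"
proof -
  obtain f where "bij_betw f {0..<card Hs} Hs" using ex_bij_betw_nat_finite[OF Hs_finite] by blast
  then have "\<exists>f. bij_betw f {..<card Hs} Hs" by (metis lessThan_atLeast0)
  then show ?thesis unfolding enumH_def by (rule someI_ex)
qed

lemma enumH_in: "r < card Hs \<Longrightarrow> enumH r \<in> Hs"
  using enumH_bij by (auto simp: bij_betw_def)

lemma Hs_carrier: "n \<in> Hs \<Longrightarrow> i \<in> {1..h} \<Longrightarrow> n i \<in> carrier F"
  unfolding Hs_def by auto

lemma Hs_sum: "n \<in> Hs \<Longrightarrow> finsum F n {1..h} = \<zero>\<^bsub>F\<^esub>"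
  unfolding Hs_def by auto

lemma Lc_carrier: "i \<in> {1..h} \<Longrightarrow> j \<le> m \<Longrightarrow> Lc j i \<in> carrier F"
  unfolding Lc_def using LB_carrier[OF _ pts_carrier _ pt_carrier] by auto

definition msgs :: "nat list set" where "msgs = {w. length w = h - 1 \<and> set w \<subseteq> carrier F}"
definition rands :: "(node \<Rightarrow> nat) set" where "rands = PiE (ccn_nodes m h) (\<lambda>u. {..<kk u})"

lemma R0_in: "R0 \<in> ccn_nodes m h"
  unfolding R0_def ccn_nodes_def ccn_receivers_def using hm by auto

lemma rho_Src: "\<rho> \<in> rands \<Longrightarrow> \<rho> Src \<in> carrier F"
proof -
  assume "\<rho> \<in> rands"
  then have "\<rho> Src < q" unfolding rands_def kk_def ccn_nodes_def by (auto simp: PiE_iff)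
  then show ?thesis unfolding carr by simp
qed

lemma rho_R0: "\<rho> \<in> rands \<Longrightarrow> nz \<rho> \<in> Hs"
proof -
  assume "\<rho> \<in> rands"
  then have "\<rho> R0 < card Hs" using R0_in unfolding rands_def kk_def R0_def by (auto simp: PiE_iff)
  then show ?thesis unfolding nz_def by (rule enumH_in)
qed

lemma nz_carrier: "\<rho> \<in> rands \<Longrightarrow> i \<in> {1..h} \<Longrightarrow> nz \<rho> i \<in> carrier F"
  using Hs_carrier rho_R0 by blast

lemma msgs_len: "w \<in> msgs \<Longrightarrow> length w = card {1..h} - 1"
  unfolding msgs_def by simp

lemma msgs_set: "w \<in> msgs \<Longrightarrow> set w \<subseteq> carrier F"
  unfolding msgs_def by simp

lemma P_carrier: "w \<in> msgs \<Longrightarrow> k \<in> carrier F \<Longrightarrow> t \<le> m \<Longrightarrow> Pw w k t \<in> carrier F"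
  using Pw_carrier[OF msgs_set _ pt_carrier] by blast

lemma lag_P:
  assumes "w \<in> msgs" "k \<in> carrier F" "t \<le> m"
  shows "(\<Oplus>\<^bsub>F\<^esub>i\<in>{1..h}. Lc t i \<otimes> Pw w k i) = Pw w k t"
proof -
  have pd: "pdeg (card {1..h} - 1) (Pw w k)"
    using Pw_pdeg[OF msgs_set[OF assms(1)] assms(2)] msgs_len[OF assms(1)] by simp
  have ne: "{1..h} \<noteq> {}" using h2 by auto
  have "Pw w k t = (\<Oplus>\<^bsub>F\<^esub>i\<in>{1..h}. Pw w k i \<otimes> LB {1..h} i t)"
    by (rule lagrange[OF _ pts_carrier ne pd pt_carrier[OF assms(3)]]) simp
  also have "\<dots> = (\<Oplus>\<^bsub>F\<^esub>i\<in>{1..h}. Lc t i \<otimes> Pw w k i)"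
  proof (rule finsum_cong')
    show "(\<lambda>i. Lc t i \<otimes> Pw w k i) \<in> {1..h} \<rightarrow> carrier F"
      using Lc_carrier P_carrier assms hm by auto
    fix i assume i: "i \<in> {1..h}"
    have "Pw w k i \<in> carrier F" using P_carrier assms i hm by auto
    moreover have "Lc t i \<in> carrier F" using Lc_carrier i assms by auto
    ultimately show "Pw w k i \<otimes> LB {1..h} i t = Lc t i \<otimes> Pw w k i"
      unfolding Lc_def by (simp add: m_comm)
  qed simp
  finally show ?thesis by simp
qed

fun encf :: "node \<Rightarrow> node \<Rightarrow> local_info \<Rightarrow> nat" where
  "encf (Rcv T) (BB i) (mw, r, inc) = enumH r i"
| "encf (BB i) (AA j) (mw, r, inc) = the (inc (R0, BB i))"
| "encf (AA i) (SS j) (mw, r, inc) = the (inc (BB i, AA i))"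
| "encf Src (SS i) (mw, r, inc) = Pw (the mw) r i"
| "encf (SS i) (AA j) (mw, r, inc) = (if j = i then the (inc (Src, SS i))
      else Lc j i \<otimes> the (inc (Src, SS i)) \<oplus> the (inc (AA i, SS i)))"
| "encf (AA t) (BB j) (mw, r, inc) = (if t \<le> h then the (inc (SS t, AA t))
      else (\<Oplus>\<^bsub>F\<^esub>i\<in>{1..h}. the (inc (SS i, AA t))))"
| "encf (BB t) (Rcv T) (mw, r, inc) = the (inc (AA t, BB t))"
| "encf u v x = \<zero>"

definition encE :: "node \<times> node \<Rightarrow> local_info \<Rightarrow> nat" where
  "encE e x = clamp (encf (fst e) (snd e) x)"

fun valf :: "nat list \<Rightarrow> (node \<Rightarrow> nat) \<Rightarrow> node \<Rightarrow> node \<Rightarrow> nat" where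
  "valf w \<rho> (Rcv T) (BB i) = nz \<rho> i"
| "valf w \<rho> (BB i) (AA j) = nz \<rho> i"
| "valf w \<rho> (AA i) (SS j) = nz \<rho> i"
| "valf w \<rho> Src (SS i) = Pw w (\<rho> Src) i"
| "valf w \<rho> (SS i) (AA j) = (if j = i then Pw w (\<rho> Src) i else Lc j i \<otimes> Pw w (\<rho> Src) i \<oplus> nz \<rho> i)"
| "valf w \<rho> (AA t) (BB j) = Pw w (\<rho> Src) t"
| "valf w \<rho> (BB t) (Rcv T) = Pw w (\<rho> Src) t"
| "valf w \<rho> u v = \<zero>"

definition "B1 = (\<lambda>i. (R0, BB i)) ` {1..h}"
definition "B2 = (\<lambda>i. (BB i, AA i)) ` {1..h}"
definition "B3 = (\<lambda>i. (AA i, SS i)) ` {1..h}"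
definition "B4 = (\<lambda>i. (Src, SS i)) ` {1..h}"
definition "B5 = {(SS i, AA j) | i j. i \<in> {1..h} \<and> (j = i \<or> (h < j \<and> j \<le> m))}"
definition "B6 = (\<lambda>t. (AA t, BB t)) ` {1..m}"
definition "B7 = {(BB t, Rcv T) | t T. T \<subseteq> {1..m} \<and> card T = h \<and> t \<in> T}"

definition "blocks = [lst B1, lst B2, lst B3, lst B4, lst B5, lst B6, lst B7]"
definition "ordE = concat blocks"
definition "Eord = B1 \<union> B2 \<union> B3 \<union> B4 \<union> B5 \<union> B6 \<union> B7"

lemma B_finite: "finite B1" "finite B2" "finite B3" "finite B4" "finite B5" "finite B6" "finite B7"
proof -
  show "finite B1" "finite B2" "finite B3" "finite B4" "finite B6"
    unfolding B1_def B2_def B3_def B4_def B6_def by auto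
  have "B5 \<subseteq> (\<lambda>(i, j). (SS i, AA j)) ` ({1..h} \<times> {1..m})" unfolding B5_def using hm by auto
  then show "finite B5" by (rule finite_subset) auto
  have "B7 \<subseteq> (\<lambda>(t, T). (BB t, Rcv T)) ` ({1..m} \<times> Pow {1..m})" unfolding B7_def by auto
  then show "finite B7" by (rule finite_subset) auto
qed

lemma set_ord: "set ordE = Eord"
  unfolding ordE_def blocks_def Eord_def using lst B_finite by auto

lemma distinct_ord: "distinct ordE"
proof -
  have d: "distinct (lst B1)" "distinct (lst B2)" "distinct (lst B3)" "distinct (lst B4)"
    "distinct (lst B5)" "distinct (lst B6)" "distinct (lst B7)" using lst B_finite by auto
  have s: "set (lst B1) = B1" "set (lst B2) = B2" "set (lst B3) = B3" "set (lst B4) = B4"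
    "set (lst B5) = B5" "set (lst B6) = B6" "set (lst B7) = B7" using lst B_finite by auto
  have x: "B1 \<inter> (B2 \<union> (B3 \<union> (B4 \<union> (B5 \<union> (B6 \<union> B7))))) = {}"
    "B2 \<inter> (B3 \<union> (B4 \<union> (B5 \<union> (B6 \<union> B7)))) = {}"
    "B3 \<inter> (B4 \<union> (B5 \<union> (B6 \<union> B7))) = {}"
    "B4 \<inter> (B5 \<union> (B6 \<union> B7)) = {}"
    "B5 \<inter> (B6 \<union> B7) = {}"
    "B6 \<inter> B7 = {}"
    by (auto simp: B1_def B2_def B3_def B4_def B5_def B6_def B7_def R0_def)
  show ?thesis unfolding ordE_def blocks_def
    by (simp add: distinct_append d s x)
qed

lemma ord_edges: "set ordE \<subseteq> bidir_ccn_edges m h"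
  unfolding set_ord Eord_def
  by (auto simp: B1_def B2_def B3_def B4_def B5_def B6_def B7_def R0_def bidir_ccn_edges_def
    dir_ccn_edges_def) (use hm in auto)

end

context ccn begin

abbreviation val :: "nat list \<Rightarrow> (node \<Rightarrow> nat) \<Rightarrow> node \<times> node \<Rightarrow> nat" where
  "val w \<rho> e \<equiv> valf w \<rho> (fst e) (snd e)"

lemma clamp_id: "v \<in> carrier F \<Longrightarrow> clamp v = v"
  unfolding clamp_def by simp

lemma enc_B1:
  assumes "\<rho> \<in> rands" "e \<in> B1"
  shows "encE e (local_view Src (fst e) w \<rho> V') = val w \<rho> e"
proof -
  obtain i where i: "i \<in> {1..h}" "e = (R0, BB i)" using assms(2) unfolding B1_def by auto
  have "encE e (local_view Src (fst e) w \<rho> V') = clamp (nz \<rho> i)"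
    unfolding i(2) encE_def R0_def local_view_def nz_def by simp
  also have "\<dots> = nz \<rho> i" using nz_carrier[OF assms(1) i(1)] by (rule clamp_id)
  finally show ?thesis unfolding i(2) R0_def by simp
qed

lemma enc_B2:
  assumes "\<rho> \<in> rands" "e \<in> B2" "\<forall>e'\<in>B1. V' e' = Some (val w \<rho> e')"
  shows "encE e (local_view Src (fst e) w \<rho> V') = val w \<rho> e"
proof -
  obtain i where i: "i \<in> {1..h}" "e = (BB i, AA i)" using assms(2) unfolding B2_def by auto
  have "(R0, BB i) \<in> B1" using i unfolding B1_def by auto
  then have v: "V' (R0, BB i) = Some (nz \<rho> i)" using assms(3) R0_def by auto
  have "encE e (local_view Src (fst e) w \<rho> V') = clamp (nz \<rho> i)"
    unfolding i(2) encE_def local_view_def using v by simp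
  also have "\<dots> = nz \<rho> i" using nz_carrier[OF assms(1) i(1)] by (rule clamp_id)
  finally show ?thesis unfolding i(2) by simp
qed

lemma enc_B3:
  assumes "\<rho> \<in> rands" "e \<in> B3" "\<forall>e'\<in>B2. V' e' = Some (val w \<rho> e')"
  shows "encE e (local_view Src (fst e) w \<rho> V') = val w \<rho> e"
proof -
  obtain i where i: "i \<in> {1..h}" "e = (AA i, SS i)" using assms(2) unfolding B3_def by auto
  have "(BB i, AA i) \<in> B2" using i unfolding B2_def by auto
  then have v: "V' (BB i, AA i) = Some (nz \<rho> i)" using assms(3) by auto
  have "encE e (local_view Src (fst e) w \<rho> V') = clamp (nz \<rho> i)"
    unfolding i(2) encE_def local_view_def using v by simp
  also have "\<dots> = nz \<rho> i" using nz_carrier[OF assms(1) i(1)] by (rule clamp_id)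
  finally show ?thesis unfolding i(2) by simp
qed

lemma enc_B4:
  assumes "w \<in> msgs" "\<rho> \<in> rands" "e \<in> B4"
  shows "encE e (local_view Src (fst e) w \<rho> V') = val w \<rho> e"
proof -
  obtain i where i: "i \<in> {1..h}" "e = (Src, SS i)" using assms(3) unfolding B4_def by auto
  have "encE e (local_view Src (fst e) w \<rho> V') = clamp (Pw w (\<rho> Src) i)"
    unfolding i(2) encE_def local_view_def by simp
  also have "\<dots> = Pw w (\<rho> Src) i"
    using P_carrier[OF assms(1) rho_Src[OF assms(2)]] i(1) hm by (intro clamp_id) auto
  finally show ?thesis unfolding i(2) by simp
qed

lemma enc_B5:
  assumes "w \<in> msgs" "\<rho> \<in> rands" "e \<in> B5" "\<forall>e'\<in>B3. V' e' = Some (val w \<rho> e')"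
    "\<forall>e'\<in>B4. V' e' = Some (val w \<rho> e')"
  shows "encE e (local_view Src (fst e) w \<rho> V') = val w \<rho> e"
proof -
  obtain i j where i: "i \<in> {1..h}" "e = (SS i, AA j)" "j = i \<or> (h < j \<and> j \<le> m)"
    using assms(3) unfolding B5_def by auto
  have "(AA i, SS i) \<in> B3" using i unfolding B3_def by auto
  then have v3: "V' (AA i, SS i) = Some (nz \<rho> i)" using assms(4) by auto
  have "(Src, SS i) \<in> B4" using i unfolding B4_def by auto
  then have v4: "V' (Src, SS i) = Some (Pw w (\<rho> Src) i)" using assms(5) by auto
  have Pc: "Pw w (\<rho> Src) i \<in> carrier F"
    using P_carrier[OF assms(1) rho_Src[OF assms(2)]] i(1) hm by auto
  have nc: "nz \<rho> i \<in> carrier F" using nz_carrier[OF assms(2) i(1)] .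
  show ?thesis
  proof (cases "j = i")
    case True
    have "encE e (local_view Src (fst e) w \<rho> V') = clamp (Pw w (\<rho> Src) i)"
      unfolding i(2) encE_def local_view_def using v4 True by simp
    also have "\<dots> = Pw w (\<rho> Src) i" using Pc by (rule clamp_id)
    finally show ?thesis unfolding i(2) using True by simp
  next
    case False
    then have jm: "j \<le> m" using i(3) by auto
    have Lcc: "Lc j i \<in> carrier F" using Lc_carrier[OF i(1) jm] .
    have "encE e (local_view Src (fst e) w \<rho> V') = clamp (Lc j i \<otimes> Pw w (\<rho> Src) i \<oplus> nz \<rho> i)"
      unfolding i(2) encE_def local_view_def using v3 v4 False by simp
    also have "\<dots> = Lc j i \<otimes> Pw w (\<rho> Src) i \<oplus> nz \<rho> i" using Pc nc Lcc by (intro clamp_id) simp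
    finally show ?thesis unfolding i(2) using False by simp
  qed
qed

lemma enc_B6:
  assumes "w \<in> msgs" "\<rho> \<in> rands" "e \<in> B6" "\<forall>e'\<in>B5. V' e' = Some (val w \<rho> e')"
  shows "encE e (local_view Src (fst e) w \<rho> V') = val w \<rho> e"
proof -
  obtain t where t: "t \<in> {1..m}" "e = (AA t, BB t)" using assms(3) unfolding B6_def by auto
  have kc: "\<rho> Src \<in> carrier F" using rho_Src[OF assms(2)] .
  have Pc: "Pw w (\<rho> Src) t \<in> carrier F" using P_carrier[OF assms(1) kc] t(1) by auto
  show ?thesis
  proof (cases "t \<le> h")
    case True
    have "(SS t, AA t) \<in> B5" using t True unfolding B5_def by auto
    then have v: "V' (SS t, AA t) = Some (Pw w (\<rho> Src) t)" using assms(4) by auto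
    have "encE e (local_view Src (fst e) w \<rho> V') = clamp (Pw w (\<rho> Src) t)"
      unfolding t(2) encE_def local_view_def using v True by simp
    also have "\<dots> = Pw w (\<rho> Src) t" using Pc by (rule clamp_id)
    finally show ?thesis unfolding t(2) by simp
  next
    case False
    have v: "\<And>i. i \<in> {1..h} \<Longrightarrow> V' (SS i, AA t) = Some (Lc t i \<otimes> Pw w (\<rho> Src) i \<oplus> nz \<rho> i)"
    proof -
      fix i assume i: "i \<in> {1..h}"
      then have "(SS i, AA t) \<in> B5" using t False unfolding B5_def by auto
      moreover have "t \<noteq> i" using i False by auto
      ultimately show "V' (SS i, AA t) = Some (Lc t i \<otimes> Pw w (\<rho> Src) i \<oplus> nz \<rho> i)"
        using assms(4) by auto
    qed
    have ci: "\<And>i. i \<in> {1..h} \<Longrightarrow> Lc t i \<otimes> Pw w (\<rho> Src) i \<in> carrier F"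
      using Lc_carrier P_carrier[OF assms(1) kc] t(1) hm by auto
    have ni: "\<And>i. i \<in> {1..h} \<Longrightarrow> nz \<rho> i \<in> carrier F" using nz_carrier[OF assms(2)] by blast
    have "(\<Oplus>i\<in>{1..h}. the (if snd (SS i, AA t) = AA t then V' (SS i, AA t) else None))
        = (\<Oplus>i\<in>{1..h}. Lc t i \<otimes> Pw w (\<rho> Src) i \<oplus> nz \<rho> i)"
      using v ci ni by (intro finsum_cong') auto
    also have "\<dots> = (\<Oplus>i\<in>{1..h}. Lc t i \<otimes> Pw w (\<rho> Src) i) \<oplus> (\<Oplus>i\<in>{1..h}. nz \<rho> i)"
      using ci ni by (intro finsum_addf) auto
    also have "\<dots> = Pw w (\<rho> Src) t \<oplus> \<zero>"
      using lag_P[OF assms(1) kc, of t] t(1) Hs_sum[OF rho_R0[OF assms(2)]] by simp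
    also have "\<dots> = Pw w (\<rho> Src) t" using Pc by simp
    finally have s: "(\<Oplus>i\<in>{1..h}. the (if snd (SS i, AA t) = AA t then V' (SS i, AA t) else None))
        = Pw w (\<rho> Src) t" .
    have "encE e (local_view Src (fst e) w \<rho> V') = clamp (Pw w (\<rho> Src) t)"
      unfolding t(2) encE_def local_view_def using False s by simp
    also have "\<dots> = Pw w (\<rho> Src) t" using Pc by (rule clamp_id)
    finally show ?thesis unfolding t(2) by simp
  qed
qed

lemma enc_B7:
  assumes "w \<in> msgs" "\<rho> \<in> rands" "e \<in> B7" "\<forall>e'\<in>B6. V' e' = Some (val w \<rho> e')"
  shows "encE e (local_view Src (fst e) w \<rho> V') = val w \<rho> e"
proof -
  obtain t T where t: "T \<subseteq> {1..m}" "t \<in> T" "e = (BB t, Rcv T)" using assms(3) unfolding B7_def by auto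
  have tm: "t \<in> {1..m}" using t by auto
  have kc: "\<rho> Src \<in> carrier F" using rho_Src[OF assms(2)] .
  have Pc: "Pw w (\<rho> Src) t \<in> carrier F" using P_carrier[OF assms(1) kc] tm by auto
  have "(AA t, BB t) \<in> B6" using tm unfolding B6_def by auto
  then have v: "V' (AA t, BB t) = Some (Pw w (\<rho> Src) t)" using assms(4) by auto
  have "encE e (local_view Src (fst e) w \<rho> V') = clamp (Pw w (\<rho> Src) t)"
    unfolding t(3) encE_def local_view_def using v by simp
  also have "\<dots> = Pw w (\<rho> Src) t" using Pc by (rule clamp_id)
  finally show ?thesis unfolding t(3) by simp
qed

lemma good_blocks:
  assumes "w \<in> msgs" "\<rho> \<in> rands"
  shows "good Src encE w \<rho> (val w \<rho>) {} blocks"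
proof -
  have s: "set (lst B1) = B1" "set (lst B2) = B2" "set (lst B3) = B3" "set (lst B4) = B4"
    "set (lst B5) = B5" "set (lst B6) = B6" "set (lst B7) = B7" using lst B_finite by auto
  show ?thesis unfolding blocks_def good.simps s
  proof (intro conjI ballI allI impI TrueI)
    fix e V' assume "e \<in> B1"
    then show "encE e (local_view Src (fst e) w \<rho> V') = val w \<rho> e" using enc_B1[OF assms(2)] by blast
  next
    fix e V' assume "e \<in> B2" "\<forall>e'\<in>{} \<union> B1. V' e' = Some (val w \<rho> e')"
    then show "encE e (local_view Src (fst e) w \<rho> V') = val w \<rho> e" using enc_B2[OF assms(2)] by blast
  next
    fix e V' assume "e \<in> B3" "\<forall>e'\<in>{} \<union> B1 \<union> B2. V' e' = Some (val w \<rho> e')"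
    then show "encE e (local_view Src (fst e) w \<rho> V') = val w \<rho> e" using enc_B3[OF assms(2)] by blast
  next
    fix e V' assume "e \<in> B4"
    then show "encE e (local_view Src (fst e) w \<rho> V') = val w \<rho> e" using enc_B4[OF assms] by blast
  next
    fix e V' assume "e \<in> B5" "\<forall>e'\<in>{} \<union> B1 \<union> B2 \<union> B3 \<union> B4. V' e' = Some (val w \<rho> e')"
    then show "encE e (local_view Src (fst e) w \<rho> V') = val w \<rho> e" using enc_B5[OF assms] by blast
  next
    fix e V' assume "e \<in> B6" "\<forall>e'\<in>{} \<union> B1 \<union> B2 \<union> B3 \<union> B4 \<union> B5. V' e' = Some (val w \<rho> e')"
    then show "encE e (local_view Src (fst e) w \<rho> V') = val w \<rho> e" using enc_B6[OF assms] by blast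
  next
    fix e V' assume "e \<in> B7" "\<forall>e'\<in>{} \<union> B1 \<union> B2 \<union> B3 \<union> B4 \<union> B5 \<union> B6. V' e' = Some (val w \<rho> e')"
    then show "encE e (local_view Src (fst e) w \<rho> V') = val w \<rho> e" using enc_B7[OF assms] by blast
  qed
qed

lemma exec_eq:
  assumes "w \<in> msgs" "\<rho> \<in> rands"
  shows "exec_round Src encE ordE w \<rho> = (\<lambda>e. if e \<in> Eord then Some (val w \<rho> e) else None)"
  using exec_round_blocks[OF good_blocks[OF assms]] unfolding ordE_def[symmetric] set_ord .

definition decE :: "node \<Rightarrow> local_info \<Rightarrow> nat list" where
  "decE u x = (case u of Rcv T \<Rightarrow> (SOME w'. length w' = h - 1 \<and> set w' \<subseteq> carrier F \<and>
       (\<exists>k'\<in>carrier F. \<forall>t\<in>T. Pw w' k' t = the (snd (snd x) (BB t, Rcv T)))) | _ \<Rightarrow> [])"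

lemma card_carrier: "card (carrier F) = q"
  unfolding carr by simp

lemma decode:
  assumes "w \<in> msgs" "\<rho> \<in> rands" "R \<in> ccn_receivers m h"
  shows "decE R (local_view Src R w \<rho> (exec_round Src encE ordE w \<rho>)) = w"
proof -
  obtain T where T: "R = Rcv T" "T \<subseteq> {1..m}" "card T = h" using assms(3) unfolding ccn_receivers_def by auto
  have kc: "\<rho> Src \<in> carrier F" using rho_Src[OF assms(2)] .
  have inB7: "\<And>t. t \<in> T \<Longrightarrow> (BB t, Rcv T) \<in> Eord" using T unfolding Eord_def B7_def by blast
  have ex: "\<And>t. t \<in> T \<Longrightarrow> exec_round Src encE ordE w \<rho> (BB t, Rcv T) = Some (Pw w (\<rho> Src) t)"
    using inB7 exec_eq[OF assms(1,2)] by simp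
  define Q where "Q = (\<lambda>w'. length w' = h - 1 \<and> set w' \<subseteq> carrier F \<and>
       (\<exists>k'\<in>carrier F. \<forall>t\<in>T. Pw w' k' t = Pw w (\<rho> Src) t))"
  have d: "decE R (local_view Src R w \<rho> (exec_round Src encE ordE w \<rho>)) = (SOME w'. Q w')"
    unfolding decE_def T(1) local_view_def Q_def using ex by (auto intro!: arg_cong[where f=Eps])
  have Qw: "Q w" unfolding Q_def using assms(1) kc unfolding msgs_def by auto
  then have "Q (SOME w'. Q w')" by (rule someI)
  then obtain w' k' where w': "length w' = h - 1" "set w' \<subseteq> carrier F" "k' \<in> carrier F"
    "\<forall>t\<in>T. Pw w' k' t = Pw w (\<rho> Src) t" and ws: "(SOME w'. Q w') = w'" unfolding Q_def by blast
  have fT: "finite T" using T(2) finite_subset by blast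
  have Tc: "T \<subseteq> carrier F" using T(2) pt_carrier by auto
  have eqall: "\<forall>X\<in>carrier F. Pw w' k' X = Pw w (\<rho> Src) X"
  proof
    fix X assume X: "X \<in> carrier F"
    show "Pw w' k' X = Pw w (\<rho> Src) X"
      by (rule Pw_eq_on[OF w'(2) msgs_set[OF assms(1)] w'(1) _ w'(3) kc fT Tc _ w'(4) X])
        (use assms(1) T(3) h2 in \<open>auto simp: msgs_def\<close>)
  qed
  have "w' = w"
    by (rule Pw_inj[OF w'(2) msgs_set[OF assms(1)] w'(1) _ w'(3) kc _ eqall])
      (use assms(1) h2 hm mq in \<open>auto simp: msgs_def card_carrier\<close>)
  then show ?thesis using d ws by simp
qed

definition Z0 :: "(nat \<Rightarrow> nat) \<Rightarrow> bool" where
  "Z0 d \<longleftrightarrow> (\<forall>i\<in>{1..h}. d i \<in> carrier F) \<and> finsum F d {1..h} = \<zero>"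

definition negd :: "(nat \<Rightarrow> nat) \<Rightarrow> nat \<Rightarrow> nat" where "negd d i = \<ominus> d i"

definition shiftH :: "(nat \<Rightarrow> nat) \<Rightarrow> nat \<Rightarrow> nat" where
  "shiftH d r = inv_into {..<card Hs} enumH (restrict (\<lambda>i. enumH r i \<oplus> d i) {1..h})"

lemma Z0_neg: "Z0 d \<Longrightarrow> Z0 (negd d)"
proof -
  assume z: "Z0 d"
  have "finsum F (negd d) {1..h} = (\<Oplus>i\<in>{1..h}. (\<ominus> \<one>) \<otimes> d i)"
    using z unfolding negd_def Z0_def by (intro finsum_cong') (auto simp: l_minus)
  also have "\<dots> = (\<ominus> \<one>) \<otimes> finsum F d {1..h}"
    using z unfolding Z0_def by (intro finsum_rdistr[symmetric]) auto
  also have "\<dots> = \<zero>" using z unfolding Z0_def by simp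
  finally show ?thesis using z unfolding Z0_def negd_def by auto
qed

lemma shift_mem:
  assumes "r < card Hs" "Z0 d"
  shows "restrict (\<lambda>i. enumH r i \<oplus> d i) {1..h} \<in> Hs"
proof -
  have n: "enumH r \<in> Hs" using enumH_in[OF assms(1)] .
  have "finsum F (restrict (\<lambda>i. enumH r i \<oplus> d i) {1..h}) {1..h} = (\<Oplus>i\<in>{1..h}. enumH r i \<oplus> d i)"
    using n assms(2) Hs_carrier unfolding Z0_def by (intro finsum_cong') auto
  also have "\<dots> = finsum F (enumH r) {1..h} \<oplus> finsum F d {1..h}"
    using n assms(2) Hs_carrier unfolding Z0_def by (intro finsum_addf) auto
  also have "\<dots> = \<zero>" using Hs_sum[OF n] assms(2) unfolding Z0_def by simp
  finally show ?thesis using n assms(2) Hs_carrier unfolding Hs_def Z0_def by auto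
qed

lemma enumH_img: "enumH ` {..<card Hs} = Hs"
  using enumH_bij by (simp add: bij_betw_def)

lemma shiftH_lt: "r < card Hs \<Longrightarrow> Z0 d \<Longrightarrow> shiftH d r < card Hs"
proof -
  assume a: "r < card Hs" "Z0 d"
  have "restrict (\<lambda>i. enumH r i \<oplus> d i) {1..h} \<in> enumH ` {..<card Hs}"
    unfolding enumH_img by (rule shift_mem[OF a])
  then have "shiftH d r \<in> {..<card Hs}" unfolding shiftH_def by (rule inv_into_into)
  then show ?thesis by simp
qed

lemma enumH_shiftH: "r < card Hs \<Longrightarrow> Z0 d \<Longrightarrow> enumH (shiftH d r) = restrict (\<lambda>i. enumH r i \<oplus> d i) {1..h}"
proof -
  assume a: "r < card Hs" "Z0 d"
  have "restrict (\<lambda>i. enumH r i \<oplus> d i) {1..h} \<in> enumH ` {..<card Hs}"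
    unfolding enumH_img by (rule shift_mem[OF a])
  then show ?thesis unfolding shiftH_def by (rule f_inv_into_f)
qed

lemma enumH_inj: "r < card Hs \<Longrightarrow> r' < card Hs \<Longrightarrow> enumH r = enumH r' \<Longrightarrow> r = r'"
  using enumH_bij unfolding bij_betw_def inj_on_def by auto

lemma shift_inv1:
  assumes "r < card Hs" "Z0 d"
  shows "shiftH (negd d) (shiftH d r) = r"
proof -
  have l1: "shiftH d r < card Hs" using shiftH_lt assms by blast
  have z2: "Z0 (negd d)" using Z0_neg[OF assms(2)] .
  have l2: "shiftH (negd d) (shiftH d r) < card Hs" using shiftH_lt[OF l1 z2] .
  have n: "enumH r \<in> Hs" using enumH_in[OF assms(1)] .
  have "enumH (shiftH (negd d) (shiftH d r)) = restrict (\<lambda>i. enumH (shiftH d r) i \<oplus> negd d i) {1..h}"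
    using enumH_shiftH[OF l1 z2] .
  also have "\<dots> = restrict (\<lambda>i. (enumH r i \<oplus> d i) \<oplus> \<ominus> d i) {1..h}"
    unfolding enumH_shiftH[OF assms] negd_def by (intro restrict_ext) simp
  also have "\<dots> = restrict (enumH r) {1..h}"
  proof (intro restrict_ext)
    fix i assume i: "i \<in> {1..h}"
    have "enumH r i \<in> carrier F" "d i \<in> carrier F" using Hs_carrier[OF n i] assms(2) i unfolding Z0_def by auto
    then show "(enumH r i \<oplus> d i) \<oplus> \<ominus> d i = enumH r i" by algebra
  qed
  also have "\<dots> = enumH r" using n unfolding Hs_def by (auto simp: PiE_iff extensional_restrict)
  finally show ?thesis using enumH_inj[OF l2 assms(1)] by blast
qed

lemma shift_inv2:
  assumes "r < card Hs" "Z0 d"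
  shows "shiftH d (shiftH (negd d) r) = r"
proof -
  have z2: "Z0 (negd d)" using Z0_neg[OF assms(2)] .
  have l1: "shiftH (negd d) r < card Hs" using shiftH_lt assms z2 by blast
  have l2: "shiftH d (shiftH (negd d) r) < card Hs" using shiftH_lt[OF l1 assms(2)] .
  have n: "enumH r \<in> Hs" using enumH_in[OF assms(1)] .
  have "enumH (shiftH d (shiftH (negd d) r)) = restrict (\<lambda>i. enumH (shiftH (negd d) r) i \<oplus> d i) {1..h}"
    using enumH_shiftH[OF l1 assms(2)] .
  also have "\<dots> = restrict (\<lambda>i. (enumH r i \<oplus> \<ominus> d i) \<oplus> d i) {1..h}"
    unfolding enumH_shiftH[OF assms(1) z2] negd_def by (intro restrict_ext) simp
  also have "\<dots> = restrict (enumH r) {1..h}"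
  proof (intro restrict_ext)
    fix i assume i: "i \<in> {1..h}"
    have "enumH r i \<in> carrier F" "d i \<in> carrier F" using Hs_carrier[OF n i] assms(2) i unfolding Z0_def by auto
    then show "(enumH r i \<oplus> \<ominus> d i) \<oplus> d i = enumH r i" by algebra
  qed
  also have "\<dots> = enumH r" using n unfolding Hs_def by (auto simp: PiE_iff extensional_restrict)
  finally show ?thesis using enumH_inj[OF l2 assms(1)] by blast
qed

definition phi :: "nat \<Rightarrow> (nat \<Rightarrow> nat \<Rightarrow> nat) \<Rightarrow> (node \<Rightarrow> nat) \<Rightarrow> node \<Rightarrow> nat" where
  "phi c \<delta> \<rho> = \<rho>(Src := \<rho> Src \<oplus> c, R0 := shiftH (\<delta> (\<rho> Src)) (\<rho> R0))"

definition psi :: "nat \<Rightarrow> (nat \<Rightarrow> nat \<Rightarrow> nat) \<Rightarrow> (node \<Rightarrow> nat) \<Rightarrow> node \<Rightarrow> nat" where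
  "psi c \<delta> \<rho> = \<rho>(Src := \<rho> Src \<ominus> c, R0 := shiftH (negd (\<delta> (\<rho> Src \<ominus> c))) (\<rho> R0))"

lemma Src_R0: "Src \<noteq> R0" unfolding R0_def by simp

lemma Src_in: "Src \<in> ccn_nodes m h" unfolding ccn_nodes_def by simp

lemma rho_R0_lt: "\<rho> \<in> rands \<Longrightarrow> \<rho> R0 < card Hs"
  using R0_in unfolding rands_def kk_def R0_def by (auto simp: PiE_iff)

lemma upd_rands:
  assumes "\<rho> \<in> rands" "a \<in> carrier F" "b < card Hs"
  shows "\<rho>(Src := a, R0 := b) \<in> rands"
proof -
  have "a < kk Src" using assms(2) unfolding kk_def carr by simp
  then have "\<rho>(Src := a) \<in> rands"
    using PiE_fun_upd[of a "\<lambda>u. {..<kk u}" Src \<rho> "ccn_nodes m h"] assms(1) Src_in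
    unfolding rands_def by (simp add: insert_absorb)
  moreover have "b < kk R0" using assms(3) Src_R0 unfolding kk_def by simp
  ultimately show ?thesis
    using PiE_fun_upd[of b "\<lambda>u. {..<kk u}" R0 "\<rho>(Src := a)" "ccn_nodes m h"] R0_in
    unfolding rands_def by (simp add: insert_absorb)
qed

context
  fixes c :: nat and \<delta> :: "nat \<Rightarrow> nat \<Rightarrow> nat"
  assumes cc: "c \<in> carrier F" and dz: "\<forall>k\<in>carrier F. Z0 (\<delta> k)"
begin

lemma phi_in: "\<rho> \<in> rands \<Longrightarrow> phi c \<delta> \<rho> \<in> rands"
  unfolding phi_def using rho_Src rho_R0_lt cc dz shiftH_lt by (intro upd_rands) auto

lemma psi_in: "\<rho> \<in> rands \<Longrightarrow> psi c \<delta> \<rho> \<in> rands"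
proof -
  assume r: "\<rho> \<in> rands"
  have k: "\<rho> Src \<ominus> c \<in> carrier F" using rho_Src[OF r] cc by simp
  show ?thesis unfolding psi_def
    using r rho_Src[OF r] rho_R0_lt[OF r] cc Z0_neg dz k shiftH_lt by (intro upd_rands) auto
qed

lemma psi_phi: "\<rho> \<in> rands \<Longrightarrow> psi c \<delta> (phi c \<delta> \<rho>) = \<rho>"
proof -
  assume r: "\<rho> \<in> rands"
  have k: "\<rho> Src \<in> carrier F" using rho_Src[OF r] .
  have e1: "(\<rho> Src \<oplus> c) \<ominus> c = \<rho> Src" using k cc by algebra
  have e2: "shiftH (negd (\<delta> (\<rho> Src))) (shiftH (\<delta> (\<rho> Src)) (\<rho> R0)) = \<rho> R0"
    using shift_inv1 rho_R0_lt[OF r] dz k by blast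
  show ?thesis unfolding psi_def phi_def using e1 e2 Src_R0 by (auto simp: fun_eq_iff)
qed

lemma phi_psi: "\<rho> \<in> rands \<Longrightarrow> phi c \<delta> (psi c \<delta> \<rho>) = \<rho>"
proof -
  assume r: "\<rho> \<in> rands"
  have k: "\<rho> Src \<in> carrier F" using rho_Src[OF r] .
  have k2: "\<rho> Src \<ominus> c \<in> carrier F" using k cc by simp
  have e1: "(\<rho> Src \<ominus> c) \<oplus> c = \<rho> Src" using k cc by algebra
  have e2: "shiftH (\<delta> (\<rho> Src \<ominus> c)) (shiftH (negd (\<delta> (\<rho> Src \<ominus> c))) (\<rho> R0)) = \<rho> R0"
    using shift_inv2 rho_R0_lt[OF r] dz k2 by blast
  show ?thesis unfolding psi_def phi_def using e1 e2 Src_R0 by (auto simp: fun_eq_iff)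
qed

lemma phi_Src: "phi c \<delta> \<rho> Src = \<rho> Src \<oplus> c"
  unfolding phi_def using Src_R0 by simp

lemma nz_phi: "\<rho> \<in> rands \<Longrightarrow> i \<in> {1..h} \<Longrightarrow> nz (phi c \<delta> \<rho>) i = nz \<rho> i \<oplus> \<delta> (\<rho> Src) i"
proof -
  assume r: "\<rho> \<in> rands" and i: "i \<in> {1..h}"
  have "nz (phi c \<delta> \<rho>) = enumH (shiftH (\<delta> (\<rho> Src)) (\<rho> R0))"
    unfolding nz_def phi_def by simp
  also have "\<dots> = restrict (\<lambda>i. enumH (\<rho> R0) i \<oplus> \<delta> (\<rho> Src) i) {1..h}"
    using enumH_shiftH rho_R0_lt[OF r] dz rho_Src[OF r] by blast
  finally show ?thesis using i unfolding nz_def by simp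
qed

lemma secrecy_generic:
  assumes "w1 \<in> msgs" "w2 \<in> msgs"
    "\<forall>\<rho>\<in>rands. \<forall>e\<in>Eord. snd e = v \<longrightarrow> val w2 (phi c \<delta> \<rho>) e = val w1 \<rho> e"
  shows "card {\<rho>\<in>rands. adv_view Src encE ordE v w1 \<rho> = x} = card {\<rho>\<in>rands. adv_view Src encE ordE v w2 \<rho> = x}"
proof (rule card_eq_by_bij[where \<phi>="phi c \<delta>" and \<psi>="psi c \<delta>"])
  show "\<forall>\<rho>\<in>rands. phi c \<delta> \<rho> \<in> rands" using phi_in by blast
  show "\<forall>\<rho>\<in>rands. psi c \<delta> \<rho> \<in> rands" using psi_in by blast
  show "\<forall>\<rho>\<in>rands. psi c \<delta> (phi c \<delta> \<rho>) = \<rho>" using psi_phi by blast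
  show "\<forall>\<rho>\<in>rands. phi c \<delta> (psi c \<delta> \<rho>) = \<rho>" using phi_psi by blast
  show "\<forall>\<rho>\<in>rands. adv_view Src encE ordE v w2 (phi c \<delta> \<rho>) = adv_view Src encE ordE v w1 \<rho>"
  proof
    fix \<rho> assume r: "\<rho> \<in> rands"
    have r2: "phi c \<delta> \<rho> \<in> rands" using phi_in[OF r] .
    have H: "\<And>a. (a, v) \<in> Eord \<Longrightarrow> valf w2 (phi c \<delta> \<rho>) a v = valf w1 \<rho> a v"
    proof -
      fix a assume a: "(a, v) \<in> Eord"
      show "valf w2 (phi c \<delta> \<rho>) a v = valf w1 \<rho> a v"
        using bspec[OF bspec[OF assms(3) r] a] by simp
    qed
    show "adv_view Src encE ordE v w2 (phi c \<delta> \<rho>) = adv_view Src encE ordE v w1 \<rho>"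
      unfolding adv_view_def exec_eq[OF assms(2) r2] exec_eq[OF assms(1) r]
      using H by (auto simp: fun_eq_iff)
  qed
qed

end

lemma Pw_shift:
  assumes "w1 \<in> msgs" "w2 \<in> msgs" "k \<in> carrier F" "a \<le> m"
  shows "Pw w2 (k \<oplus> (Pw w1 \<zero> a \<ominus> Pw w2 \<zero> a)) a = Pw w1 k a"
proof -
  have ac: "a \<in> carrier F" using pt_carrier assms(4) .
  have p1: "Pw w1 \<zero> a \<in> carrier F" using P_carrier assms by simp
  have p2: "Pw w2 \<zero> a \<in> carrier F" using P_carrier assms by simp
  have kc: "k \<oplus> (Pw w1 \<zero> a \<ominus> Pw w2 \<zero> a) \<in> carrier F" using p1 p2 assms(3) by simp
  have "Pw w2 (k \<oplus> (Pw w1 \<zero> a \<ominus> Pw w2 \<zero> a)) a = (k \<oplus> (Pw w1 \<zero> a \<ominus> Pw w2 \<zero> a)) \<oplus> Pw w2 \<zero> a"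
    using Pw_split[OF msgs_set[OF assms(2)] kc ac] .
  also have "\<dots> = k \<oplus> Pw w1 \<zero> a" using p1 p2 assms(3) by algebra
  also have "\<dots> = Pw w1 k a" using Pw_split[OF msgs_set[OF assms(1)] assms(3) ac] by simp
  finally show ?thesis .
qed

lemma e_into_SS: "e \<in> Eord \<Longrightarrow> snd e = SS i \<Longrightarrow> e = (AA i, SS i) \<or> e = (Src, SS i)"
  unfolding Eord_def B1_def B2_def B3_def B4_def B5_def B6_def B7_def R0_def by auto

lemma e_into_AA: "e \<in> Eord \<Longrightarrow> snd e = AA t \<Longrightarrow>
   (e = (BB t, AA t) \<and> t \<in> {1..h}) \<or> (\<exists>i\<in>{1..h}. e = (SS i, AA t) \<and> (t = i \<or> (h < t \<and> t \<le> m)))"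
  unfolding Eord_def B1_def B2_def B3_def B4_def B5_def B6_def B7_def R0_def by auto

lemma e_into_BB: "e \<in> Eord \<Longrightarrow> snd e = BB t \<Longrightarrow> (e = (R0, BB t) \<and> t \<in> {1..h}) \<or> e = (AA t, BB t)"
  unfolding Eord_def B1_def B2_def B3_def B4_def B5_def B6_def B7_def by auto

lemma Z0_zero: "Z0 (\<lambda>i. \<zero>)"
  unfolding Z0_def by simp

lemma secrecy:
  assumes "v \<in> ccn_nodes m h - {Src} - ccn_receivers m h" "w1 \<in> msgs" "w2 \<in> msgs"
  shows "card {\<rho>\<in>rands. adv_view Src encE ordE v w1 \<rho> = x} = card {\<rho>\<in>rands. adv_view Src encE ordE v w2 \<rho> = x}"
proof -
  define cf where "cf = (\<lambda>a. Pw w1 \<zero> a \<ominus> Pw w2 \<zero> a)"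
  have cfc: "\<And>a. a \<le> m \<Longrightarrow> cf a \<in> carrier F"
    unfolding cf_def using P_carrier assms(2,3) by simp
  have shift: "\<And>k a. k \<in> carrier F \<Longrightarrow> a \<le> m \<Longrightarrow> Pw w2 (k \<oplus> cf a) a = Pw w1 k a"
    unfolding cf_def using Pw_shift assms(2,3) by blast
  define d0 :: "nat \<Rightarrow> nat \<Rightarrow> nat" where "d0 = (\<lambda>k i. \<zero>)"
  have d0z: "\<forall>k\<in>carrier F. Z0 (d0 k)" unfolding d0_def using Z0_zero by simp
  have v: "v \<in> SS ` {1..h} \<or> v \<in> AA ` {1..m} \<or> v \<in> BB ` {1..m}"
    using assms(1) unfolding ccn_nodes_def by auto
  show ?thesis
  proof (cases "v \<in> SS ` {1..h}")
    case True
    then obtain i where i: "i \<in> {1..h}" "v = SS i" by auto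
    have im: "i \<le> m" using i hm by auto
    show ?thesis
    proof (rule secrecy_generic[OF cfc[OF im] d0z assms(2,3)], intro ballI impI)
      fix \<rho> e assume r: "\<rho> \<in> rands" and e: "e \<in> Eord" "snd e = v"
      have k: "\<rho> Src \<in> carrier F" using rho_Src[OF r] .
      have "e = (AA i, SS i) \<or> e = (Src, SS i)" using e_into_SS e i by blast
      then show "val w2 (phi (cf i) d0 \<rho>) e = val w1 \<rho> e"
      proof
        assume "e = (AA i, SS i)"
        then show ?thesis using nz_phi[OF cfc[OF im] d0z r i(1)] nz_carrier[OF r i(1)] unfolding d0_def by simp
      next
        assume "e = (Src, SS i)"
        then show ?thesis using phi_Src[OF cfc[OF im] d0z] shift[OF k im] by simp
      qed
    qed
  next
    case notS: False
    show ?thesis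
    proof (cases "v \<in> AA ` {1..m}")
      case True
      then obtain t where t: "t \<in> {1..m}" "v = AA t" by auto
      have tm: "t \<le> m" using t by auto
      show ?thesis
      proof (cases "t \<le> h")
        case True
        show ?thesis
        proof (rule secrecy_generic[OF cfc[OF tm] d0z assms(2,3)], intro ballI impI)
          fix \<rho> e assume r: "\<rho> \<in> rands" and e: "e \<in> Eord" "snd e = v"
          have k: "\<rho> Src \<in> carrier F" using rho_Src[OF r] .
          have "(e = (BB t, AA t) \<and> t \<in> {1..h}) \<or> (\<exists>i\<in>{1..h}. e = (SS i, AA t) \<and> (t = i \<or> (h < t \<and> t \<le> m)))"
            using e_into_AA e t by blast
          then show "val w2 (phi (cf t) d0 \<rho>) e = val w1 \<rho> e"
          proof
            assume a: "e = (BB t, AA t) \<and> t \<in> {1..h}"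
            then show ?thesis using nz_phi[OF cfc[OF tm] d0z r] nz_carrier[OF r] unfolding d0_def by simp
          next
            assume "\<exists>i\<in>{1..h}. e = (SS i, AA t) \<and> (t = i \<or> (h < t \<and> t \<le> m))"
            then have "e = (SS t, AA t)" using True by auto
            then show ?thesis using phi_Src[OF cfc[OF tm] d0z] shift[OF k tm] by simp
          qed
        qed
      next
        case False
        define dd :: "nat \<Rightarrow> nat \<Rightarrow> nat" where
          "dd = (\<lambda>k i. Lc t i \<otimes> Pw w1 k i \<oplus> (\<ominus> \<one>) \<otimes> (Lc t i \<otimes> Pw w2 (k \<oplus> cf t) i))"
        have ddz: "\<forall>k\<in>carrier F. Z0 (dd k)"
        proof
          fix k assume k: "k \<in> carrier F"
          have k2: "k \<oplus> cf t \<in> carrier F" using k cfc[OF tm] by simp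
          have A: "\<And>i. i \<in> {1..h} \<Longrightarrow> Lc t i \<otimes> Pw w1 k i \<in> carrier F"
            using Lc_carrier[OF _ tm] P_carrier[OF assms(2) k] hm by auto
          have B: "\<And>i. i \<in> {1..h} \<Longrightarrow> Lc t i \<otimes> Pw w2 (k \<oplus> cf t) i \<in> carrier F"
            using Lc_carrier[OF _ tm] P_carrier[OF assms(3) k2] hm by auto
          have "finsum F (dd k) {1..h} = (\<Oplus>i\<in>{1..h}. Lc t i \<otimes> Pw w1 k i) \<oplus>
              (\<Oplus>i\<in>{1..h}. (\<ominus> \<one>) \<otimes> (Lc t i \<otimes> Pw w2 (k \<oplus> cf t) i))"
            unfolding dd_def using A B by (intro finsum_addf) auto
          also have "(\<Oplus>i\<in>{1..h}. (\<ominus> \<one>) \<otimes> (Lc t i \<otimes> Pw w2 (k \<oplus> cf t) i)) =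
              (\<ominus> \<one>) \<otimes> (\<Oplus>i\<in>{1..h}. Lc t i \<otimes> Pw w2 (k \<oplus> cf t) i)"
            using B by (intro finsum_rdistr[symmetric]) auto
          also have "(\<Oplus>i\<in>{1..h}. Lc t i \<otimes> Pw w2 (k \<oplus> cf t) i) = Pw w2 (k \<oplus> cf t) t"
            using lag_P[OF assms(3) k2 tm] .
          also have "(\<Oplus>i\<in>{1..h}. Lc t i \<otimes> Pw w1 k i) = Pw w1 k t"
            using lag_P[OF assms(2) k tm] .
          also have "Pw w1 k t \<oplus> (\<ominus> \<one>) \<otimes> Pw w2 (k \<oplus> cf t) t = \<zero>"
            using neg_one_eq[OF P_carrier[OF assms(2) k tm] P_carrier[OF assms(3) k2 tm]] shift[OF k tm] by simp
          finally have "finsum F (dd k) {1..h} = \<zero>" .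
          moreover have "\<forall>i\<in>{1..h}. dd k i \<in> carrier F" unfolding dd_def using A B by simp
          ultimately show "Z0 (dd k)" unfolding Z0_def by simp
        qed
        show ?thesis
        proof (rule secrecy_generic[OF cfc[OF tm] ddz assms(2,3)], intro ballI impI)
          fix \<rho> e assume r: "\<rho> \<in> rands" and e: "e \<in> Eord" "snd e = v"
          have k: "\<rho> Src \<in> carrier F" using rho_Src[OF r] .
          have k2: "\<rho> Src \<oplus> cf t \<in> carrier F" using k cfc[OF tm] by simp
          have "(e = (BB t, AA t) \<and> t \<in> {1..h}) \<or> (\<exists>i\<in>{1..h}. e = (SS i, AA t) \<and> (t = i \<or> (h < t \<and> t \<le> m)))"
            using e_into_AA e t by blast
          then obtain i where i: "i \<in> {1..h}" "e = (SS i, AA t)" "t \<noteq> i" using False by auto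
          have A: "Lc t i \<otimes> Pw w1 (\<rho> Src) i \<in> carrier F"
            using Lc_carrier[OF i(1) tm] P_carrier[OF assms(2) k] i(1) hm by auto
          have B: "Lc t i \<otimes> Pw w2 (\<rho> Src \<oplus> cf t) i \<in> carrier F"
            using Lc_carrier[OF i(1) tm] P_carrier[OF assms(3) k2] i(1) hm by auto
          have n: "nz \<rho> i \<in> carrier F" using nz_carrier[OF r i(1)] .
          have "val w2 (phi (cf t) dd \<rho>) e = Lc t i \<otimes> Pw w2 (\<rho> Src \<oplus> cf t) i \<oplus> (nz \<rho> i \<oplus> dd (\<rho> Src) i)"
            using i phi_Src[OF cfc[OF tm] ddz] nz_phi[OF cfc[OF tm] ddz r i(1)] by simp
          also have "\<dots> = Lc t i \<otimes> Pw w1 (\<rho> Src) i \<oplus> nz \<rho> i"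
            unfolding dd_def using A B n by algebra
          also have "\<dots> = val w1 \<rho> e" using i by simp
          finally show "val w2 (phi (cf t) dd \<rho>) e = val w1 \<rho> e" .
        qed
      qed
    next
      case notA: False
      then obtain t where t: "t \<in> {1..m}" "v = BB t" using v notS by auto
      have tm: "t \<le> m" using t by auto
      show ?thesis
      proof (rule secrecy_generic[OF cfc[OF tm] d0z assms(2,3)], intro ballI impI)
        fix \<rho> e assume r: "\<rho> \<in> rands" and e: "e \<in> Eord" "snd e = v"
        have k: "\<rho> Src \<in> carrier F" using rho_Src[OF r] .
        have "(e = (R0, BB t) \<and> t \<in> {1..h}) \<or> e = (AA t, BB t)" using e_into_BB e t by blast
        then show "val w2 (phi (cf t) d0 \<rho>) e = val w1 \<rho> e"
        proof
          assume a: "e = (R0, BB t) \<and> t \<in> {1..h}"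
          then show ?thesis using nz_phi[OF cfc[OF tm] d0z r] nz_carrier[OF r] unfolding d0_def R0_def by simp
        next
          assume "e = (AA t, BB t)"
          then show ?thesis using phi_Src[OF cfc[OF tm] d0z] shift[OF k tm] by simp
        qed
      qed
    qed
  qed
qed

theorem scheme:
  "secure_single_round_scheme (ccn_nodes m h) (bidir_ccn_edges m h) Src (ccn_receivers m h) F (h - 1)"
  unfolding secure_single_round_scheme_def Let_def
proof (intro exI[of _ kk] exI[of _ ordE] exI[of _ encE] exI[of _ decE] conjI)
  show "\<forall>u\<in>ccn_nodes m h. 0 < kk u" unfolding kk_def using mq Hs_card by auto
  show "distinct ordE" by (rule distinct_ord)
  show "set ordE \<subseteq> bidir_ccn_edges m h" by (rule ord_edges)
  show "\<forall>e x. encE e x \<in> carrier F" unfolding encE_def clamp_def by simp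
  have M: "{w. length w = h - 1 \<and> set w \<subseteq> carrier F} = msgs" unfolding msgs_def by simp
  have Rn: "Pi\<^sub>E (ccn_nodes m h) (\<lambda>u. {..<kk u}) = rands" unfolding rands_def by simp
  show "\<forall>w\<in>{w. length w = h - 1 \<and> set w \<subseteq> carrier F}. \<forall>\<rho>\<in>Pi\<^sub>E (ccn_nodes m h) (\<lambda>u. {..<kk u}).
      \<forall>R\<in>ccn_receivers m h. decE R (local_view Src R w \<rho> (exec_round Src encE ordE w \<rho>)) = w"
    unfolding M Rn using decode by blast
  show "\<forall>v\<in>ccn_nodes m h - {Src} - ccn_receivers m h.
     \<forall>w1\<in>{w. length w = h - 1 \<and> set w \<subseteq> carrier F}. \<forall>w2\<in>{w. length w = h - 1 \<and> set w \<subseteq> carrier F}. \<forall>x.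
       card {\<rho> \<in> Pi\<^sub>E (ccn_nodes m h) (\<lambda>u. {..<kk u}). adv_view Src encE ordE v w1 \<rho> = x} =
       card {\<rho> \<in> Pi\<^sub>E (ccn_nodes m h) (\<lambda>u. {..<kk u}). adv_view Src encE ordE v w2 \<rho> = x}"
    unfolding M Rn using secrecy by blast
qed

end

theorem lemma2:
  fixes m h :: nat
  assumes "2 \<le> h" and "h + 1 \<le> m"
  shows "\<exists>F :: nat ring. field F \<and> finite (carrier F) \<and>
           secure_single_round_scheme (ccn_nodes m h) (bidir_ccn_edges m h) Src
             (ccn_receivers m h) F (h - 1)"
proof -
  obtain F :: "nat ring" where F: "field F" "carrier F = {..<card (carrier F)}" "m < card (carrier F)"
    using exists_nat_field[of m] by blast
  have C: "ccn F m h (card (carrier F))"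
    by (rule ccn.intro[OF F(1)]) (unfold ccn_axioms_def, use F assms in auto)
  have fin: "finite (carrier F)" using F(3) card.infinite by fastforce
  show ?thesis using ccn.scheme[OF C] fin F(1) by blast
qed

end
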